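(* Let $m\ge1$ and $\widetilde Z_{\mathrm{HT}}(2m;\mathbf x,\mathbf y)=\big[\prod_{i=1}^m x_i^{2m-1}y_i^{2m-1}\big]Z_{\mathrm{HT}}(2m;\mathbf x,\mathbf y)$, which is a polynomial. Then \[ \widetilde Z_{\mathrm{HT}}(2m;\mathbf x,\mathbf y)=\Big[\prod_{i=1}^m x_i^{2(2m-1)}\Big]C_{\mathrm{HT}}(2m)+(\text{terms of lower total degree in }x_1,\dots,x_m),\qquad C_{\mathrm{HT}}(2m)=\prod_{i=1}^{2m}\sigma(a^i). \]
   Context: Notation: $\bar z=z^{-1}$, $\sigma(z)=z-z^{-1}$; $a$ is a fixed nonzero parameter. Vertex weights: at a vertex where a horizontal and a vertical line cross, the four incident edges are oriented with exactly two pointing in. Type 1: horizontal edges in, vertical out; type 2: horizontal out, vertical in; type 3: horizontal right, vertical up; type 4: horizontal left, vertical down; type 5: horizontal left, vertical up; type 6: horizontal right, vertical down. A vertex with spectral parameter $z$ has weight $\sigma(a^2)$ (types 1,2), $\sigma(az)$ (types 3,4), $\sigma(a\bar z)$ (types 5,6). A state is an orientation of internal edges satisfying the two-in rule at every vertex; the partition function is the sum over states of the product of vertex weights. $Z_{\mathrm{HT}}(2m;\mathbf x,\mathbf y)$, $\mathbf x=(x_1,\dots,x_m)$, $\mathbf y=(y_1,\dots,y_m)$: vertices $(r,j)$, $1\le r\le 2m$ (rows from the top), $1\le j\le m$ (columns from the left), vertex $(r,j)$ having parameter $x_{\min(r,2m+1-r)}\bar y_j$; edges join consecutive vertices in rows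 and columns; left boundary edges point right (into the grid), top boundary edges point up, bottom boundary edges point down; for each $r\le m$ the edge to the right of $(r,m)$ and the edge to the right of $(2m+1-r,m)$ form a single edge (a U-turn) with one orientation (out of one of these vertices, into the other). States are in bijection with $2m\times 2m$ half-turn symmetric alternating-sign matrices. *)

theory Defs
  imports Complex_Main
begin

definition sig :: "complex \<Rightarrow> complex" where
  "sig z = z - inverse z"

text \<open>Local configuration at a vertex, given by the four incident edges:
  L = edge to the left  (True = points right, i.e. into the vertex),
  R = edge to the right (True = points right, i.e. out of the vertex),
  A = edge above        (True = points up, i.e. out of the vertex),
  B = edge below        (True = points up, i.e. into the vertex).\<close>
definition n_in :: "bool \<Rightarrow> bool \<Rightarrow> bool \<Rightarrow> bool \<Rightarrow> nat" where
  "n_in L R A B = (if L then 1 else 0) + (if R then 0 else 1) + (if A then 0 else 1) + (if B then 1 else 0)"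

definition vweight :: "complex \<Rightarrow> complex \<Rightarrow> bool \<Rightarrow> bool \<Rightarrow> bool \<Rightarrow> bool \<Rightarrow> complex" where
  "vweight a z L R A B =
     (if (L, R, A, B) = (True, False, True, False) then sig (a\<^sup>2)        \<comment> \<open>type 1\<close>
      else if (L, R, A, B) = (False, True, False, True) then sig (a\<^sup>2)  \<comment> \<open>type 2\<close>
      else if (L, R, A, B) = (True, True, True, True) then sig (a * z)    \<comment> \<open>type 3\<close>
      else if (L, R, A, B) = (False, False, False, False) then sig (a * z) \<comment> \<open>type 4\<close>
      else if (L, R, A, B) = (False, False, True, True) then sig (a * inverse z) \<comment> \<open>type 5\<close>
      else if (L, R, A, B) = (True, True, False, False) then sig (a * inverse z) \<comment> \<open>type 6\<close>
      else 0)"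

text \<open>States of the half-turn model of size 2m.
  h r j (1 \<le> r \<le> 2m, 0 \<le> j \<le> m): horizontal edge to the right of vertex (r,j)
    (j = 0: left boundary edge), True = pointing right.
  v r j (0 \<le> r \<le> 2m, 1 \<le> j \<le> m): vertical edge below vertex (r,j)
    (r = 0: top boundary, r = 2m: bottom boundary), True = pointing up.
  The edges h r m and h (2m+1-r) m are the two ends of the U-turn edge: it points out
  of one of these vertices and into the other, i.e. h r m \<noteq> h (2m+1-r) m.
  Values outside the index ranges are fixed to False so that the set is finite.\<close>
definition HT_states :: "nat \<Rightarrow> ((nat \<Rightarrow> nat \<Rightarrow> bool) \<times> (nat \<Rightarrow> nat \<Rightarrow> bool)) set" where
  "HT_states m = {(h, v).
      (\<forall>r j. \<not> (1 \<le> r \<and> r \<le> 2*m \<and> j \<le> m) \<longrightarrow> \<not> h r j) \<and>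
      (\<forall>r j. \<not> (r \<le> 2*m \<and> 1 \<le> j \<and> j \<le> m) \<longrightarrow> \<not> v r j) \<and>
      (\<forall>r\<in>{1..2*m}. h r 0) \<and>
      (\<forall>j\<in>{1..m}. v 0 j) \<and>
      (\<forall>j\<in>{1..m}. \<not> v (2*m) j) \<and>
      (\<forall>r\<in>{1..m}. h r m \<noteq> h (2*m+1-r) m) \<and>
      (\<forall>r\<in>{1..2*m}. \<forall>j\<in>{1..m}. n_in (h r (j-1)) (h r j) (v (r-1) j) (v r j) = 2)}"

definition Z_HT :: "nat \<Rightarrow> complex \<Rightarrow> (nat \<Rightarrow> complex) \<Rightarrow> (nat \<Rightarrow> complex) \<Rightarrow> complex" where
  "Z_HT m a x y = (\<Sum>(h, v)\<in>HT_states m.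
      \<Prod>r\<in>{1..2*m}. \<Prod>j\<in>{1..m}.
        vweight a (x (min r (2*m+1-r)) * inverse (y j)) (h r (j-1)) (h r j) (v (r-1) j) (v r j))"

definition Z_HT_tilde :: "nat \<Rightarrow> complex \<Rightarrow> (nat \<Rightarrow> complex) \<Rightarrow> (nat \<Rightarrow> complex) \<Rightarrow> complex" where
  "Z_HT_tilde m a x y = (\<Prod>i\<in>{1..m}. x i ^ (2*m-1) * y i ^ (2*m-1)) * Z_HT m a x y"

definition C_HT :: "nat \<Rightarrow> complex \<Rightarrow> complex" where
  "C_HT m a = (\<Prod>i\<in>{1..2*m}. sig (a ^ i))"

end

theory Submission
  imports Defs "HOL-Library.FuncSet"
begin

lemma pairs_hit:
  fixes X :: "nat set"
  assumes XS: "X \<subseteq> {m+1-k..m+k}" and km: "k \<le> m"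
    and np: "\<forall>x\<in>X. \<forall>y\<in>X. x + y \<noteq> 2*m+1" and cX: "card X = k"
    and r: "r \<in> {m+1-k..m+k}"
  shows "r \<in> X \<or> 2*m+1-r \<in> X"
proof -
  define f where "f x = min x (2*m+1-x)" for x :: nat
  have fin: "finite X" using XS finite_subset by blast
  have inj: "inj_on f X"
  proof (rule inj_onI)
    fix x y assume xX: "x \<in> X" and yX: "y \<in> X" and e: "f x = f y"
    have "x \<le> 2*m" "y \<le> 2*m" using xX yX XS km by auto
    moreover have "x + y \<noteq> 2*m+1" using np xX yX by auto
    ultimately show "x = y" using e unfolding f_def by (auto simp: min_def split: if_splits)
  qed
  have sub: "f ` X \<subseteq> {m+1-k..m}"
  proof
    fix z assume "z \<in> f ` X"
    then obtain x where "x \<in> X" "z = f x" by auto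
    moreover have "x \<in> {m+1-k..m+k}" using XS \<open>x \<in> X\<close> by auto
    ultimately show "z \<in> {m+1-k..m}" using km unfolding f_def by (auto simp: min_def)
  qed
  have "card (f ` X) = card {m+1-k..m}" using card_image[OF inj] cX km by simp
  hence eq: "f ` X = {m+1-k..m}" using card_subset_eq[OF _ sub] by simp
  have "f r \<in> {m+1-k..m}" using r km unfolding f_def by (auto simp: min_def)
  then obtain x where xX: "x \<in> X" and fx: "f x = f r" using eq by (metis imageE)
  have "x \<le> 2*m" using xX XS km by auto
  hence "x = r \<or> x = 2*m+1-r" using fx r km unfolding f_def by (auto simp: min_def split: if_splits)
  thus ?thesis using xX by auto
qed

lemma rank_sum:
  fixes J :: "nat set" and g :: "nat \<Rightarrow> 'b::comm_monoid_add"
  assumes "finite J"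
  shows "(\<Sum>c\<in>J. g (card {j\<in>J. j < c})) = (\<Sum>k<card J. g k)"
  using assms
proof (induction J rule: finite_linorder_max_induct)
  case empty then show ?case by simp
next
  case (insert b A)
  have bA: "b \<notin> A" using insert by auto
  have "(\<Sum>c\<in>insert b A. g (card {j\<in>insert b A. j < c})) =
        g (card {j\<in>insert b A. j < b}) + (\<Sum>c\<in>A. g (card {j\<in>insert b A. j < c}))"
    using insert bA by simp
  also have "{j\<in>insert b A. j < b} = A" using insert by auto
  also have "(\<Sum>c\<in>A. g (card {j\<in>insert b A. j < c})) = (\<Sum>c\<in>A. g (card {j\<in>A. j < c}))"
  proof (rule sum.cong)
    fix c assume "c \<in> A"
    hence "{j\<in>insert b A. j < c} = {j\<in>A. j < c}" using insert by auto
    thus "g (card {j\<in>insert b A. j < c}) = g (card {j\<in>A. j < c})" by simp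
  qed simp
  finally show ?case using insert bA by (simp add: add.commute)
qed

definition Rows :: "nat \<Rightarrow> nat \<Rightarrow> nat set" where "Rows m n = {m+1-n..m+n}"

definition Valid :: "nat \<Rightarrow> nat \<Rightarrow> nat set \<Rightarrow> (nat \<Rightarrow> nat) set" where
  "Valid m n J = {\<rho>. (\<forall>j\<in>J. \<rho> j \<in> Rows m n) \<and> inj_on \<rho> J \<and>
      (\<forall>i\<in>J. \<forall>j\<in>J. \<rho> i + \<rho> j \<noteq> 2*m+1) \<and> (\<forall>j. j \<notin> J \<longrightarrow> \<rho> j = 0)}"

definition cell :: "complex \<Rightarrow> nat set \<Rightarrow> (nat \<Rightarrow> nat) \<Rightarrow> nat \<Rightarrow> nat \<Rightarrow> complex" where
  "cell a J \<rho> r j = (if \<rho> j = r then sig (a^2)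
      else if (\<forall>c\<in>J. c \<le> j \<longrightarrow> \<rho> c \<noteq> r) = (r < \<rho> j) then a else - inverse a)"

definition Wt :: "complex \<Rightarrow> nat \<Rightarrow> nat \<Rightarrow> nat set \<Rightarrow> (nat \<Rightarrow> nat) \<Rightarrow> complex" where
  "Wt a m n J \<rho> = (\<Prod>j\<in>J. \<Prod>r\<in>Rows m n. cell a J \<rho> r j)"

definition fac0 :: "complex \<Rightarrow> nat \<Rightarrow> nat \<Rightarrow> complex" where
  "fac0 a n k = sig (a^2) * a^(2*k) * (- inverse a)^(4*n+1-2*k)"
definition fac1 :: "complex \<Rightarrow> nat \<Rightarrow> nat \<Rightarrow> complex" where
  "fac1 a n k = sig (a^2) * a^(4*n+1-2*k) * (- inverse a)^(2*k)"
definition gstep :: "complex \<Rightarrow> nat \<Rightarrow> complex" where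
  "gstep a n = (\<Sum>k<Suc n. fac0 a n k + fac1 a n k)"

lemma card_Rows: "n \<le> m + 1 \<Longrightarrow> card (Rows m n) = 2*n"
  unfolding Rows_def by simp

lemma Rows_Suc:
  assumes "Suc n \<le> m"
  shows "Rows m (Suc n) = insert (m-n) (insert (m+n+1) (Rows m n))"
  using assms unfolding Rows_def by auto

lemma finite_Valid:
  assumes "finite J" shows "finite (Valid m n J)"
proof -
  let ?g = "\<lambda>f j. if j \<in> J then f j else (0::nat)"
  have "Valid m n J \<subseteq> ?g ` (J \<rightarrow>\<^sub>E Rows m n)"
  proof
    fix \<rho> assume r: "\<rho> \<in> Valid m n J"
    have "\<rho> = ?g (restrict \<rho> J)" using r unfolding Valid_def by (auto simp: fun_eq_iff)
    moreover have "restrict \<rho> J \<in> J \<rightarrow>\<^sub>E Rows m n" using r unfolding Valid_def by auto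
    ultimately show "\<rho> \<in> ?g ` (J \<rightarrow>\<^sub>E Rows m n)" by blast
  qed
  moreover have "finite (J \<rightarrow>\<^sub>E Rows m n)" using assms by (auto intro: finite_PiE simp: Rows_def)
  ultimately show ?thesis using finite_subset by blast
qed

lemma Valid_bij:
  assumes fin: "finite J" and cJ: "card J = Suc n" and nm: "Suc n \<le> m"
  shows "bij_betw (\<lambda>(c, t, \<rho>'). \<rho>'(c := t))
           (SIGMA c:J. {m-n, m+n+1} \<times> Valid m n (J - {c})) (Valid m (Suc n) J)"
proof -
  let ?R = "Rows m n"
  have t0R: "m - n \<notin> ?R" and t1R: "m+n+1 \<notin> ?R" using nm by (auto simp: Rows_def)
  show ?thesis
  proof (rule bij_betwI')
    fix p q assume p: "p \<in> (SIGMA c:J. {m-n, m+n+1} \<times> Valid m n (J - {c}))"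
      and q: "q \<in> (SIGMA c:J. {m-n, m+n+1} \<times> Valid m n (J - {c}))"
    obtain c1 u1 r1 where p': "p = (c1, u1, r1)" by (cases p) auto
    obtain c2 u2 r2 where q': "q = (c2, u2, r2)" by (cases q) auto
    have c1: "c1 \<in> J" "u1 \<in> {m-n, m+n+1}" "r1 \<in> Valid m n (J - {c1})" using p p' by auto
    have c2: "c2 \<in> J" "u2 \<in> {m-n, m+n+1}" "r2 \<in> Valid m n (J - {c2})" using q q' by auto
    show "((\<lambda>(c, t, \<rho>'). \<rho>'(c := t)) p = (\<lambda>(c, t, \<rho>'). \<rho>'(c := t)) q) = (p = q)"
    proof
      assume e: "(\<lambda>(c, t, \<rho>'). \<rho>'(c := t)) p = (\<lambda>(c, t, \<rho>'). \<rho>'(c := t)) q"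
      hence e': "r1(c1 := u1) = r2(c2 := u2)" using p' q' by simp
      have "c1 = c2"
      proof (rule ccontr)
        assume ne: "c1 \<noteq> c2"
        have "u1 = r2 c1" using fun_cong[OF e', of c1] ne by simp
        moreover have "r2 c1 \<in> ?R" using c2(3) c1(1) ne unfolding Valid_def by auto
        ultimately show False using c1(2) t0R t1R by auto
      qed
      moreover have "u1 = u2" using fun_cong[OF e', of c1] \<open>c1 = c2\<close> by simp
      moreover have "r1 = r2"
      proof
        fix j show "r1 j = r2 j"
        proof (cases "j = c1")
          case True thus ?thesis using c1(3) c2(3) \<open>c1 = c2\<close> unfolding Valid_def by auto
        next
          case False thus ?thesis using fun_cong[OF e', of j] \<open>c1 = c2\<close> by simp
        qed
      qed
      ultimately show "p = q" using p' q' by simp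
    qed simp
  next
    fix p assume p: "p \<in> (SIGMA c:J. {m-n, m+n+1} \<times> Valid m n (J - {c}))"
    obtain c u r where p': "p = (c, u, r)" by (cases p) auto
    have c: "c \<in> J" "u \<in> {m-n, m+n+1}" "r \<in> Valid m n (J - {c})" using p p' by auto
    have rv: "\<forall>j\<in>J - {c}. r j \<in> ?R" "inj_on r (J - {c})"
       "\<forall>i\<in>J - {c}. \<forall>j\<in>J - {c}. r i + r j \<noteq> 2*m+1" "\<forall>j. j \<notin> J - {c} \<longrightarrow> r j = 0"
      using c(3) unfolding Valid_def by auto
    have uR: "u \<in> Rows m (Suc n)" using c(2) nm by (auto simp: Rows_def)
    have RR: "?R \<subseteq> Rows m (Suc n)" using nm by (auto simp: Rows_def)
    have "inj_on (r(c := u)) J"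
    proof -
      have J: "J = insert c (J - {c})" using c(1) by auto
      have "inj_on (r(c := u)) (J - {c})" using rv(2) by (simp add: inj_on_def)
      moreover have "u \<notin> (r(c := u)) ` (J - {c})"
      proof
        assume "u \<in> (r(c := u)) ` (J - {c})"
        then obtain k where k: "k \<in> J - {c}" "u = r k" by auto
        thus False using rv(1) c(2) t0R t1R by force
      qed
      ultimately have "inj_on (r(c := u)) (insert c (J - {c}))"
        by (intro iffD2[OF inj_on_insert]) simp
      thus ?thesis using c(1) by (simp add: insert_absorb)
    qed
    moreover have "\<forall>i\<in>J. \<forall>j\<in>J. (r(c := u)) i + (r(c := u)) j \<noteq> 2*m+1"
    proof (intro ballI)
      fix i j assume i: "i \<in> J" and j: "j \<in> J"
      have oth: "\<And>k. k \<in> J - {c} \<Longrightarrow> u + r k \<noteq> 2*m+1"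
      proof -
        fix k assume k: "k \<in> J - {c}"
        have "r k \<in> ?R" using rv(1) k by auto
        thus "u + r k \<noteq> 2*m+1" using c(2) nm by (auto simp: Rows_def)
      qed
      show "(r(c := u)) i + (r(c := u)) j \<noteq> 2*m+1"
        using oth[of i] oth[of j] rv(3) i j by (cases "i = c"; cases "j = c"; auto; presburger)
    qed
    moreover have "\<forall>j\<in>J. (r(c := u)) j \<in> Rows m (Suc n)" using rv(1) uR RR by auto
    moreover have "\<forall>j. j \<notin> J \<longrightarrow> (r(c := u)) j = 0" using rv(4) c(1) by auto
    ultimately show "(\<lambda>(c, t, \<rho>'). \<rho>'(c := t)) p \<in> Valid m (Suc n) J"
      using p' unfolding Valid_def by simp
  next
    fix \<rho> assume r: "\<rho> \<in> Valid m (Suc n) J"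
    have rv: "\<forall>j\<in>J. \<rho> j \<in> Rows m (Suc n)" "inj_on \<rho> J"
       "\<forall>i\<in>J. \<forall>j\<in>J. \<rho> i + \<rho> j \<noteq> 2*m+1" "\<forall>j. j \<notin> J \<longrightarrow> \<rho> j = 0"
      using r unfolding Valid_def by auto
    have X: "\<rho> ` J \<subseteq> {m+1-Suc n..m+Suc n}" using rv(1) by (auto simp: Rows_def)
    have cX: "card (\<rho> ` J) = Suc n" using card_image[OF rv(2)] cJ by simp
    have "m - n \<in> \<rho> ` J \<or> 2*m+1-(m-n) \<in> \<rho> ` J"
      by (rule pairs_hit[OF X nm _ cX]) (use rv(3) nm in auto)
    then obtain c where c: "c \<in> J" "\<rho> c \<in> {m-n, m+n+1}" using nm by auto
    define r where "r = \<rho>(c := 0)"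
    have "r \<in> Valid m n (J - {c})"
    proof -
      have "\<forall>j\<in>J - {c}. r j \<in> ?R"
      proof
        fix j assume j: "j \<in> J - {c}"
        have "\<rho> j \<noteq> \<rho> c" using rv(2) j c(1) by (auto simp: inj_on_def)
        moreover have "\<rho> j + \<rho> c \<noteq> 2*m+1" using rv(3) j c(1) by auto
        moreover have "\<rho> j \<in> Rows m (Suc n)" using rv(1) j by auto
        ultimately show "r j \<in> ?R" using c(2) j nm unfolding r_def Rows_def by auto
      qed
      moreover have "inj_on r (J - {c})" using rv(2) unfolding r_def inj_on_def by auto
      moreover have "\<forall>i\<in>J - {c}. \<forall>j\<in>J - {c}. r i + r j \<noteq> 2*m+1" using rv(3) unfolding r_def by auto
      moreover have "\<forall>j. j \<notin> J - {c} \<longrightarrow> r j = 0" using rv(4) unfolding r_def by auto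
      ultimately show ?thesis unfolding Valid_def by blast
    qed
    moreover have "\<rho> = r(c := \<rho> c)" unfolding r_def by simp
    ultimately show "\<exists>p\<in>(SIGMA c:J. {m-n, m+n+1} \<times> Valid m n (J - {c})).
                     \<rho> = (\<lambda>(c, t, \<rho>'). \<rho>'(c := t)) p"
      using c by (intro bexI[of _ "(c, \<rho> c, r)"]) auto
  qed
qed

lemma prod_if_card:
  assumes "finite A"
  shows "(\<Prod>x\<in>A. if P x then u else w) = u ^ card {x\<in>A. P x} * w ^ card {x\<in>A. \<not> P x}"
proof -
  have "(\<Prod>x\<in>A. if P x then u else w) = (\<Prod>x\<in>A \<inter> {x. P x}. u) * (\<Prod>x\<in>A \<inter> - {x. P x}. w)"
    using assms by (rule prod.If_cases)
  also have "A \<inter> {x. P x} = {x\<in>A. P x}" by auto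
  also have "A \<inter> - {x. P x} = {x\<in>A. \<not> P x}" by auto
  finally show ?thesis by simp
qed

locale wsetup =
  fixes a :: complex and m n :: nat and J :: "nat set" and c :: nat and r :: "nat \<Rightarrow> nat" and u :: nat
  assumes fin: "finite J" and cJ: "c \<in> J" and nm: "Suc n \<le> m" and card: "card J = Suc n"
    and rV: "r \<in> Valid m n (J - {c})" and u: "u \<in> {m-n, m+n+1}"
begin

abbreviation "J' \<equiv> J - {c}"
abbreviation "R \<equiv> Rows m n"
definition "K = {j\<in>J'. j < c}"
abbreviation "\<rho> \<equiv> r(c := u)"
abbreviation "ia \<equiv> - inverse a"

lemma rv: "\<forall>j\<in>J'. r j \<in> R" "inj_on r J'" "\<forall>j. j \<notin> J' \<longrightarrow> r j = 0"
  using rV unfolding Valid_def by auto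

lemma uR: "u \<notin> R" using u nm by (auto simp: Rows_def)
lemma finR: "finite R" by (simp add: Rows_def)
lemma cardJ': "card J' = n" using card cJ fin by simp
lemma finJ': "finite J'" using fin by simp
lemma KJ': "K \<subseteq> J'" unfolding K_def by auto
lemma cardK: "card K = card {j\<in>J. j < c}"
proof -
  have "K = {j\<in>J. j < c}" unfolding K_def by auto
  thus ?thesis by simp
qed
lemma cardK_le: "card K \<le> n" using card_mono[OF finJ' KJ'] cardJ' by simp
lemma rK: "r ` K \<subseteq> R" using rv(1) KJ' by auto
lemma card_rK: "card (r ` K) = card K"
  using card_image[OF inj_on_subset[OF rv(2) KJ']] .

lemma cond_eq:
  assumes "x \<noteq> u"
  shows "(\<forall>c'\<in>J. c' \<le> j \<longrightarrow> \<rho> c' \<noteq> x) = (\<forall>c'\<in>J'. c' \<le> j \<longrightarrow> r c' \<noteq> x)"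
  using assms by auto

lemma inner:
  assumes j: "j \<in> J'" and x: "x \<in> R"
  shows "cell a J \<rho> x j = cell a J' r x j"
proof -
  have "x \<noteq> u" using x uR by auto
  have rj: "\<rho> j = r j" using j by auto
  show ?thesis unfolding cell_def rj cond_eq[OF \<open>x \<noteq> u\<close>] ..
qed

lemma inner_prod: "(\<Prod>j\<in>J'. \<Prod>x\<in>R. cell a J \<rho> x j) = Wt a m n J' r"
  unfolding Wt_def by (intro prod.cong refl) (simp add: inner)

lemma colc_cond:
  assumes x: "x \<in> R"
  shows "(\<forall>c'\<in>J. c' \<le> c \<longrightarrow> \<rho> c' \<noteq> x) = (x \<notin> r ` K)"
proof -
  have "x \<noteq> u" using x uR by auto
  hence "(\<forall>c'\<in>J. c' \<le> c \<longrightarrow> \<rho> c' \<noteq> x) = (\<forall>c'\<in>J'. c' \<le> c \<longrightarrow> r c' \<noteq> x)" by (rule cond_eq)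
  also have "\<dots> = (x \<notin> r ` K)"
  proof -
    have le: "\<And>c'. c' \<in> J' \<Longrightarrow> (c' \<le> c) = (c' < c)" by auto
    show ?thesis unfolding K_def using le by blast
  qed
  finally show ?thesis .
qed

lemma rowu_cond:
  assumes j: "j \<in> J'"
  shows "(\<forall>c'\<in>J. c' \<le> j \<longrightarrow> \<rho> c' \<noteq> u) = (j < c)"
proof -
  have "\<forall>c'\<in>J'. r c' \<noteq> u" using rv(1) uR by auto
  thus ?thesis using j cJ by auto
qed

lemma rowv_cond:
  assumes "v \<notin> R" "v \<noteq> u"
  shows "(\<forall>c'\<in>J. c' \<le> j \<longrightarrow> \<rho> c' \<noteq> v)"
  using assms rv(1) by auto

lemma Rows_split: "(\<Prod>x\<in>Rows m (Suc n). f x) = f (m-n) * f (m+n+1) * (\<Prod>x\<in>R. f x)"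
proof -
  have "m - n \<notin> insert (m+n+1) R" "m+n+1 \<notin> R" using nm by (auto simp: Rows_def)
  thus ?thesis using Rows_Suc[OF nm] finR by (simp add: mult.assoc)
qed

lemma Wt_split:
  "Wt a m (Suc n) J \<rho> =
    (\<Prod>x\<in>Rows m (Suc n). cell a J \<rho> x c) *
    ((\<Prod>j\<in>J'. cell a J \<rho> (m-n) j) * (\<Prod>j\<in>J'. cell a J \<rho> (m+n+1) j) * Wt a m n J' r)"
proof -
  have "Wt a m (Suc n) J \<rho> = (\<Prod>x\<in>Rows m (Suc n). cell a J \<rho> x c) *
         (\<Prod>j\<in>J'. \<Prod>x\<in>Rows m (Suc n). cell a J \<rho> x j)"
    unfolding Wt_def using prod.remove[OF fin cJ] by simp
  also have "(\<Prod>j\<in>J'. \<Prod>x\<in>Rows m (Suc n). cell a J \<rho> x j) =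
       (\<Prod>j\<in>J'. cell a J \<rho> (m-n) j * cell a J \<rho> (m+n+1) j * (\<Prod>x\<in>R. cell a J \<rho> x j))"
    by (simp add: Rows_split)
  also have "\<dots> = (\<Prod>j\<in>J'. cell a J \<rho> (m-n) j) * (\<Prod>j\<in>J'. cell a J \<rho> (m+n+1) j) *
                 (\<Prod>j\<in>J'. \<Prod>x\<in>R. cell a J \<rho> x j)"
    by (simp add: prod.distrib)
  finally show ?thesis by (simp only: inner_prod)
qed

lemma rowu_prod:
  "(\<Prod>j\<in>J'. cell a J \<rho> u j) = (if u = m-n then a ^ card K * ia ^ (n - card K) else ia ^ card K * a ^ (n - card K))"
proof -
  have "(\<Prod>j\<in>J'. cell a J \<rho> u j) = (\<Prod>j\<in>J'. if j < c then (if u = m-n then a else ia) else (if u = m-n then ia else a))"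
  proof (intro prod.cong refl)
    fix j assume j: "j \<in> J'"
    have "r j \<in> R" using rv(1) j by auto
    hence ne: "r j \<noteq> u" and lt: "(u < r j) = (u = m-n)" using uR u nm by (auto simp: Rows_def)
    show "cell a J \<rho> u j = (if j < c then (if u = m-n then a else ia) else (if u = m-n then ia else a))"
      unfolding cell_def using j ne lt rowu_cond[OF j] by auto
  qed
  also have "\<dots> = (if u = m-n then a else ia) ^ card {j\<in>J'. j < c} * (if u = m-n then ia else a) ^ card {j\<in>J'. \<not> j < c}"
    by (rule prod_if_card[OF finJ'])
  also have "card {j\<in>J'. \<not> j < c} = n - card K"
  proof -
    have "{j\<in>J'. \<not> j < c} = J' - K" unfolding K_def by auto
    thus ?thesis using card_Diff_subset[OF _ KJ'] finJ' cardJ' finite_subset[OF KJ'] by simp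
  qed
  also have "card {j\<in>J'. j < c} = card K" unfolding K_def ..
  also have "(if u = m-n then a else ia) ^ card K * (if u = m-n then ia else a) ^ (n - card K) =
     (if u = m-n then a ^ card K * ia ^ (n - card K) else ia ^ card K * a ^ (n - card K))" by simp
  finally show ?thesis .
qed

lemma rowv_prod:
  assumes "v \<in> {m-n, m+n+1}" "v \<noteq> u"
  shows "(\<Prod>j\<in>J'. cell a J \<rho> v j) = (if v = m-n then a ^ n else ia ^ n)"
proof -
  have vR: "v \<notin> R" using assms nm by (auto simp: Rows_def)
  have "(\<Prod>j\<in>J'. cell a J \<rho> v j) = (\<Prod>j\<in>J'. if v = m-n then a else ia)"
  proof (intro prod.cong refl)
    fix j assume j: "j \<in> J'"
    have "r j \<in> R" using rv(1) j by auto
    hence ne: "r j \<noteq> v" and lt: "(v < r j) = (v = m-n)" using vR assms nm by (auto simp: Rows_def)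
    show "cell a J \<rho> v j = (if v = m-n then a else ia)"
      unfolding cell_def using j ne lt rowv_cond[OF vR assms(2)] by auto
  qed
  thus ?thesis using cardJ' by simp
qed

lemma colc_prod:
  "(\<Prod>x\<in>Rows m (Suc n). cell a J \<rho> x c) =
     (if u = m-n then sig (a^2) * ia * (a ^ card K * ia ^ (2*n - card K))
      else a * sig (a^2) * (ia ^ card K * a ^ (2*n - card K)))"
proof -
  have rc: "\<rho> c = u" by simp
  have A: "(\<Prod>x\<in>R. cell a J \<rho> x c) = (\<Prod>x\<in>R. if x \<in> r ` K then (if u = m-n then a else ia) else (if u = m-n then ia else a))"
  proof (intro prod.cong refl)
    fix x assume x: "x \<in> R"
    have ne: "x \<noteq> u" using x uR by auto
    have lt: "(x < u) = (u \<noteq> m-n)" using x u nm by (auto simp: Rows_def)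
    show "cell a J \<rho> x c = (if x \<in> r ` K then (if u = m-n then a else ia) else (if u = m-n then ia else a))"
      unfolding cell_def using ne lt colc_cond[OF x] by auto
  qed
  also have "\<dots> = (if u = m-n then a else ia) ^ card {x\<in>R. x \<in> r ` K} * (if u = m-n then ia else a) ^ card {x\<in>R. x \<notin> r ` K}"
    by (rule prod_if_card[OF finR])
  also have "card {x\<in>R. x \<in> r ` K} = card K" using rK card_rK by (metis Int_absorb1 Int_def)
  also have "card {x\<in>R. x \<notin> r ` K} = 2*n - card K"
  proof -
    have "{x\<in>R. x \<notin> r ` K} = R - r ` K" by auto
    moreover have "card (R - r ` K) = card R - card (r ` K)"
      using card_Diff_subset[OF _ rK] finite_subset[OF rK finR] by simp
    ultimately show ?thesis using card_rK card_Rows[of n m] nm by simp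
  qed
  also have "(if u = m-n then a else ia) ^ card K * (if u = m-n then ia else a) ^ (2*n - card K) =
     (if u = m-n then a ^ card K * ia ^ (2*n - card K) else ia ^ card K * a ^ (2*n - card K))" by simp
  finally have A': "(\<Prod>x\<in>R. cell a J \<rho> x c) = (if u = m-n then a ^ card K * ia ^ (2*n - card K) else ia ^ card K * a ^ (2*n - card K))" .
  have B: "cell a J \<rho> u c = sig (a^2)" unfolding cell_def by simp
  have C0: "u = m-n \<Longrightarrow> cell a J \<rho> (m+n+1) c = ia"
    unfolding cell_def using nm rowv_cond[of "m+n+1" c] by (auto simp: Rows_def)
  have C1: "u = m+n+1 \<Longrightarrow> cell a J \<rho> (m-n) c = a"
    unfolding cell_def using nm rowv_cond[of "m-n" c] by (auto simp: Rows_def)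
  show ?thesis
  proof (cases "u = m-n")
    case True
    thus ?thesis using Rows_split[of "\<lambda>x. cell a J \<rho> x c"] A' B C0 by simp
  next
    case False
    hence "u = m+n+1" using u by auto
    moreover have "m+n+1 \<noteq> m-n" by arith
    ultimately show ?thesis using Rows_split[of "\<lambda>x. cell a J \<rho> x c"] A' B C1 by (simp add: mult_ac)
  qed
qed

lemma Wt_fac:
  "Wt a m (Suc n) J \<rho> = (if u = m-n then fac0 a n (card K) else fac1 a n (card K)) * Wt a m n J' r"
proof -
  have Kn: "card K \<le> n" by (rule cardK_le)
  have ne: "m+n+1 \<noteq> m-n" by arith
  show ?thesis
  proof (cases "u = m-n")
    case True
    have v: "(\<Prod>j\<in>J'. cell a J \<rho> (m+n+1) j) = ia ^ n"
      using rowv_prod[of "m+n+1"] True ne by simp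
    have e: "4*n+1-2*card K = Suc ((2*n - card K) + (n - card K) + n)" using Kn by arith
    have "Wt a m (Suc n) J \<rho> = sig (a^2) * ia * (a ^ card K * ia ^ (2*n - card K)) *
        ((a ^ card K * ia ^ (n - card K)) * ia ^ n * Wt a m n J' r)"
      using Wt_split colc_prod rowu_prod v True by simp
    also have "\<dots> = fac0 a n (card K) * Wt a m n J' r"
      unfolding fac0_def e by (simp add: power_add mult_2 mult_ac)
    finally show ?thesis using True by simp
  next
    case False
    hence uu: "u = m+n+1" using u by auto
    have v: "(\<Prod>j\<in>J'. cell a J \<rho> (m-n) j) = a ^ n"
      using rowv_prod[of "m-n"] False by simp
    have e: "4*n+1-2*card K = Suc ((2*n - card K) + (n - card K) + n)" using Kn by arith
    have "Wt a m (Suc n) J \<rho> = a * sig (a^2) * (ia ^ card K * a ^ (2*n - card K)) *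
        (a ^ n * (ia ^ card K * a ^ (n - card K)) * Wt a m n J' r)"
      using Wt_split colc_prod rowu_prod v False uu by simp
    also have "\<dots> = fac1 a n (card K) * Wt a m n J' r"
      unfolding fac1_def e by (simp add: power_add mult_2 mult_ac)
    finally show ?thesis using False by simp
  qed
qed

end

lemma main_sum:
  assumes "finite J" "card J = n" "n \<le> m"
  shows "(\<Sum>\<rho>\<in>Valid m n J. Wt a m n J \<rho>) = (\<Prod>i<n. gstep a i)"
  using assms
proof (induction n arbitrary: J)
  case 0
  hence J: "J = {}" by simp
  have "Valid m 0 J = {\<lambda>_. 0}" unfolding J Valid_def by auto
  thus ?case unfolding Wt_def J by simp
next
  case (Suc n)
  have fin: "finite J" and cJ: "card J = Suc n" and nm: "Suc n \<le> m" using Suc.prems by auto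
  let ?S = "SIGMA c:J. {m-n, m+n+1} \<times> Valid m n (J - {c})"
  have t01: "m - n \<noteq> m+n+1" by arith
  have "(\<Sum>\<rho>\<in>Valid m (Suc n) J. Wt a m (Suc n) J \<rho>) =
        (\<Sum>p\<in>?S. Wt a m (Suc n) J ((\<lambda>(c, t, \<rho>'). \<rho>'(c := t)) p))"
    using sum.reindex_bij_betw[OF Valid_bij[OF fin cJ nm], of "Wt a m (Suc n) J"] by simp
  also have "\<dots> = (\<Sum>c\<in>J. \<Sum>q\<in>{m-n, m+n+1} \<times> Valid m n (J - {c}). Wt a m (Suc n) J ((snd q)(c := fst q)))"
    by (subst sum.Sigma) (auto simp: fin finite_Valid split_def intro!: sum.cong)
  also have "\<dots> = (\<Sum>c\<in>J. (fac0 a n (card {j\<in>J. j < c}) + fac1 a n (card {j\<in>J. j < c})) * (\<Prod>i<n. gstep a i))"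
  proof (rule sum.cong[OF refl])
    fix c assume c: "c \<in> J"
    have finV: "finite (Valid m n (J - {c}))" using fin by (simp add: finite_Valid)
    have IH: "(\<Sum>\<rho>\<in>Valid m n (J - {c}). Wt a m n (J - {c}) \<rho>) = (\<Prod>i<n. gstep a i)"
      using Suc.IH[of "J - {c}"] fin cJ c nm by simp
    have "(\<Sum>q\<in>{m-n, m+n+1} \<times> Valid m n (J - {c}). Wt a m (Suc n) J ((snd q)(c := fst q))) =
          (\<Sum>t\<in>{m-n, m+n+1}. \<Sum>r\<in>Valid m n (J - {c}). Wt a m (Suc n) J (r(c := t)))"
      by (subst sum.cartesian_product) (simp add: split_def)
    also have "\<dots> = (\<Sum>r\<in>Valid m n (J - {c}). Wt a m (Suc n) J (r(c := m-n))) +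
                     (\<Sum>r\<in>Valid m n (J - {c}). Wt a m (Suc n) J (r(c := m+n+1)))"
      using t01 by simp
    also have "(\<Sum>r\<in>Valid m n (J - {c}). Wt a m (Suc n) J (r(c := m-n))) =
               (\<Sum>r\<in>Valid m n (J - {c}). fac0 a n (card {j\<in>J. j < c}) * Wt a m n (J - {c}) r)"
    proof (rule sum.cong[OF refl])
      fix r assume r: "r \<in> Valid m n (J - {c})"
      interpret w: wsetup a m n J c r "m-n" using fin c nm cJ r by unfold_locales auto
      show "Wt a m (Suc n) J (r(c := m-n)) = fac0 a n (card {j\<in>J. j < c}) * Wt a m n (J - {c}) r"
        using w.Wt_fac w.cardK by simp
    qed
    also have "(\<Sum>r\<in>Valid m n (J - {c}). Wt a m (Suc n) J (r(c := m+n+1))) =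
               (\<Sum>r\<in>Valid m n (J - {c}). fac1 a n (card {j\<in>J. j < c}) * Wt a m n (J - {c}) r)"
    proof (rule sum.cong[OF refl])
      fix r assume r: "r \<in> Valid m n (J - {c})"
      interpret w: wsetup a m n J c r "m+n+1" using fin c nm cJ r by unfold_locales auto
      show "Wt a m (Suc n) J (r(c := m+n+1)) = fac1 a n (card {j\<in>J. j < c}) * Wt a m n (J - {c}) r"
        using w.Wt_fac w.cardK t01 by simp
    qed
    also have "(\<Sum>r\<in>Valid m n (J - {c}). fac0 a n (card {j\<in>J. j < c}) * Wt a m n (J - {c}) r) +
               (\<Sum>r\<in>Valid m n (J - {c}). fac1 a n (card {j\<in>J. j < c}) * Wt a m n (J - {c}) r) =
          (fac0 a n (card {j\<in>J. j < c}) + fac1 a n (card {j\<in>J. j < c})) * (\<Prod>i<n. gstep a i)"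
      by (simp add: sum_distrib_left[symmetric] IH distrib_right)
    finally show "(\<Sum>q\<in>{m-n, m+n+1} \<times> Valid m n (J - {c}). Wt a m (Suc n) J ((snd q)(c := fst q))) =
          (fac0 a n (card {j\<in>J. j < c}) + fac1 a n (card {j\<in>J. j < c})) * (\<Prod>i<n. gstep a i)" .
  qed
  also have "\<dots> = (\<Sum>k<card J. fac0 a n k + fac1 a n k) * (\<Prod>i<n. gstep a i)"
    by (simp add: sum_distrib_right[symmetric] rank_sum[OF fin, of "\<lambda>k. fac0 a n k + fac1 a n k"])
  also have "\<dots> = (\<Prod>i<Suc n. gstep a i)" unfolding gstep_def cJ by (simp add: mult.commute)
  finally show ?case .
qed

lemma fac_sum:
  assumes a: "a \<noteq> 0" and k: "k \<le> n"
  shows "fac0 a n k + fac1 a n k = sig (a^2) * sig (a^(4*(n-k)+1))"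
proof -
  have e1: "4*n+1-2*k = 2*k' + 1 + 2*k" if "k' = 2*n - 2*k" for k' using k that by arith
  define p where "p = 4*(n-k)+1"
  have ep: "4*n+1-2*k = p + 2*k" and ep2: "4*n+1-2*k = 2*(2*n-k) + 1" unfolding p_def using k by arith+
  have inv: "a^(2*k) * inverse a ^ (2*k) = 1" using a by (simp add: power_mult_distrib[symmetric])
  have "fac0 a n k = - sig (a^2) * inverse a ^ p"
  proof -
    have "(- inverse a) ^ (4*n+1-2*k) = - (inverse a ^ (4*n+1-2*k))"
      unfolding ep2 by (simp add: power_mult power2_eq_square)
    hence "fac0 a n k = - sig (a^2) * (a^(2*k) * inverse a ^ (4*n+1-2*k))"
      unfolding fac0_def by simp
    also have "a^(2*k) * inverse a ^ (4*n+1-2*k) = inverse a ^ p"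
      unfolding ep power_add using inv by (simp add: mult_ac)
    finally show ?thesis by simp
  qed
  moreover have "fac1 a n k = sig (a^2) * a ^ p"
  proof -
    have "fac1 a n k = sig (a^2) * (a^(4*n+1-2*k) * inverse a ^ (2*k))"
      unfolding fac1_def by (simp add: power_mult)
    also have "a^(4*n+1-2*k) * inverse a ^ (2*k) = a ^ p"
      unfolding ep power_add using inv by (simp add: mult_ac)
    finally show ?thesis .
  qed
  moreover have "sig (a^p) = a^p - inverse a ^ p" by (simp add: sig_def power_inverse)
  ultimately show ?thesis unfolding p_def[symmetric] by (simp only:) (simp add: algebra_simps)
qed

lemma sig_step:
  assumes a: "a \<noteq> 0"
  shows "sig (a^2) * sig (a^(4*n+5)) + sig (a^(2*n+1)) * sig (a^(2*n+2)) = sig (a^(2*n+3)) * sig (a^(2*n+4))"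
proof -
  define A where "A = a^(2*n)"
  have A: "A \<noteq> 0" using a unfolding A_def by simp
  have e0: "a^(4*n+5) = a^(2*n+2*n+5)" by (rule arg_cong[where f="power a"]) arith
  have e: "a^(4*n+5) = A*A*a^5" "a^(2*n+1) = A*a" "a^(2*n+2) = A*a^2" "a^(2*n+3) = A*a^3" "a^(2*n+4) = A*a^4"
    unfolding A_def e0 by (simp_all only: power_add power_one_right)
  show ?thesis unfolding e sig_def using a A by (simp add: field_simps eval_nat_numeral)
qed

lemma gstep_eq:
  assumes a: "a \<noteq> 0"
  shows "gstep a n = sig (a^(2*n+1)) * sig (a^(2*n+2))"
proof -
  have "gstep a n = sig (a^2) * (\<Sum>k<Suc n. sig (a^(4*(n-k)+1)))"
    unfolding gstep_def sum_distrib_left by (intro sum.cong refl) (simp add: fac_sum[OF a])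
  also have "\<dots> = sig (a^(2*n+1)) * sig (a^(2*n+2))"
  proof (induction n)
    case 0 thus ?case by (simp add: mult.commute power2_eq_square)
  next
    case (Suc n)
    have "(\<Sum>k<Suc (Suc n). sig (a^(4*(Suc n-k)+1))) = sig (a^(4*n+5)) + (\<Sum>k<Suc n. sig (a^(4*(n-k)+1)))"
      by (subst sum.lessThan_Suc_shift) (simp add: add.commute)
    hence "sig (a^2) * (\<Sum>k<Suc (Suc n). sig (a^(4*(Suc n-k)+1))) =
           sig (a^2) * sig (a^(4*n+5)) + sig (a^(2*n+1)) * sig (a^(2*n+2))"
      using Suc.IH by (simp add: distrib_left)
    also have "\<dots> = sig (a^(2*n+3)) * sig (a^(2*n+4))" by (rule sig_step[OF a])
    finally show ?case by (simp add: numeral_eq_Suc)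
  qed
  finally show ?thesis .
qed

lemma G_eq:
  assumes a: "a \<noteq> 0"
  shows "(\<Prod>i<m. gstep a i) = C_HT m a"
proof (induction m)
  case 0 thus ?case by (simp add: C_HT_def)
next
  case (Suc m)
  have "C_HT (Suc m) a = C_HT m a * sig (a^(2*m+1)) * sig (a^(2*m+2))"
    unfolding C_HT_def by (simp add: prod.nat_ivl_Suc' mult_ac)
  thus ?case using Suc.IH gstep_eq[OF a, of m] by (simp add: mult_ac)
qed

definition VV :: "nat \<Rightarrow> (nat \<times> nat) set" where "VV m = {1..2*m} \<times> {1..m}"
definition kk :: "nat \<Rightarrow> nat \<Rightarrow> nat" where "kk m r = min r (2*m+1-r)"
definition spec :: "(nat \<Rightarrow> nat \<Rightarrow> bool) \<Rightarrow> nat \<times> nat \<Rightarrow> bool" where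
  "spec h w = (h (fst w) (snd w - 1) \<noteq> h (fst w) (snd w))"
definition allowed :: "(nat \<Rightarrow> nat \<Rightarrow> bool) \<Rightarrow> nat \<times> nat \<Rightarrow> nat set" where
  "allowed h w = (if spec h w then {1} else {0,2})"
definition coef :: "complex \<Rightarrow> (nat \<Rightarrow> nat \<Rightarrow> bool) \<times> (nat \<Rightarrow> nat \<Rightarrow> bool) \<Rightarrow> nat \<times> nat \<Rightarrow> nat \<Rightarrow> complex" where
  "coef a s w e = (if spec (fst s) w then sig (a^2)
     else if (fst s (fst w) (snd w - 1) = snd s (fst w - 1) (snd w)) = (e = 2) then a else - inverse a)"
definition tm :: "nat \<Rightarrow> (nat \<Rightarrow> complex) \<Rightarrow> (nat \<Rightarrow> complex) \<Rightarrow> nat \<times> nat \<Rightarrow> nat \<Rightarrow> complex" where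
  "tm m x y w e = x (kk m (fst w)) ^ e * y (snd w) ^ (2 - e) * inverse (x (kk m (fst w))) * inverse (y (snd w))"

lemma vw_expand:
  assumes n: "n_in L R A B = 2" and X: "X \<noteq> 0" and Y: "Y \<noteq> 0" and a: "a \<noteq> 0"
  shows "vweight a (X * inverse Y) L R A B =
    (\<Sum>e\<in>(if L \<noteq> R then {1} else {0,2}).
       (if L \<noteq> R then sig (a^2) else if (L = A) = (e = 2) then a else - inverse a) *
       (X^e * Y^(2-e) * inverse X * inverse Y))"
  using n X Y a
  by (cases L; cases R; cases A; cases B) (simp_all add: n_in_def vweight_def sig_def field_simps power2_eq_square)

lemma kk_range: "r \<in> {1..2*m} \<Longrightarrow> kk m r \<in> {1..m}"
  unfolding kk_def by auto

lemma HT_nin: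
  assumes "(h, v) \<in> HT_states m" "r \<in> {1..2*m}" "j \<in> {1..m}"
  shows "n_in (h r (j-1)) (h r j) (v (r-1) j) (v r j) = 2"
  using assms unfolding HT_states_def by auto

lemma Z_expand:
  assumes a: "a \<noteq> 0" and xy: "\<forall>i\<in>{1..m}. x i \<noteq> 0 \<and> y i \<noteq> 0"
  shows "Z_HT m a x y = (\<Sum>s\<in>HT_states m. \<Sum>E\<in>PiE (VV m) (allowed (fst s)).
            \<Prod>w\<in>VV m. coef a s w (E w) * tm m x y w (E w))"
  unfolding Z_HT_def
proof (rule sum.cong[OF refl])
  fix s assume s: "s \<in> HT_states m"
  obtain h v where hv: "s = (h, v)" by (cases s) auto
  have "(\<Prod>r\<in>{1..2*m}. \<Prod>j\<in>{1..m}.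
        vweight a (x (min r (2*m+1-r)) * inverse (y j)) (h r (j-1)) (h r j) (v (r-1) j) (v r j)) =
      (\<Prod>w\<in>VV m. vweight a (x (kk m (fst w)) * inverse (y (snd w))) (h (fst w) (snd w - 1)) (h (fst w) (snd w)) (v (fst w - 1) (snd w)) (v (fst w) (snd w)))"
    unfolding VV_def kk_def by (simp add: prod.cartesian_product split_def)
  also have "\<dots> = (\<Prod>w\<in>VV m. \<Sum>e\<in>allowed h w. coef a s w e * tm m x y w e)"
  proof (rule prod.cong[OF refl])
    fix w assume w: "w \<in> VV m"
    obtain r j where rj: "w = (r, j)" by (cases w) auto
    have r: "r \<in> {1..2*m}" and j: "j \<in> {1..m}" using w rj unfolding VV_def by auto
    have n: "n_in (h r (j-1)) (h r j) (v (r-1) j) (v r j) = 2" using HT_nin[OF s[unfolded hv] r j] .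
    have X: "x (kk m r) \<noteq> 0" using xy kk_range[OF r] by auto
    have Y: "y j \<noteq> 0" using xy j by auto
    show "vweight a (x (kk m (fst w)) * inverse (y (snd w))) (h (fst w) (snd w - 1)) (h (fst w) (snd w)) (v (fst w - 1) (snd w)) (v (fst w) (snd w)) =
          (\<Sum>e\<in>allowed h w. coef a s w e * tm m x y w e)"
      unfolding rj using vw_expand[OF n X Y a]
      by (simp add: allowed_def coef_def tm_def spec_def hv)
  qed
  also have "\<dots> = (\<Sum>E\<in>PiE (VV m) (allowed h). \<Prod>w\<in>VV m. coef a s w (E w) * tm m x y w (E w))"
    by (rule prod_sum_PiE) (auto simp: VV_def allowed_def)
  finally show "(case s of (h, v) \<Rightarrow> \<Prod>r\<in>{1..2*m}. \<Prod>j\<in>{1..m}.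
        vweight a (x (min r (2*m+1-r)) * inverse (y j)) (h r (j-1)) (h r j) (v (r-1) j) (v r j)) =
      (\<Sum>E\<in>PiE (VV m) (allowed (fst s)). \<Prod>w\<in>VV m. coef a s w (E w) * tm m x y w (E w))"
    using hv by simp
qed

lemma nin_eq: "n_in L R A B = 2 \<Longrightarrow> L = R \<Longrightarrow> A = B"
  by (cases L; cases R; cases A; cases B) (simp_all add: n_in_def)

lemma nin_spec: "n_in L R A B = 2 \<Longrightarrow> L \<noteq> R \<Longrightarrow> (L \<and> \<not> R \<and> A \<and> \<not> B) \<or> (\<not> L \<and> R \<and> \<not> A \<and> B)"
  by (cases L; cases R; cases A; cases B) (simp_all add: n_in_def)

lemma HT_props:
  assumes "(h, v) \<in> HT_states m"
  shows "\<forall>r\<in>{1..2*m}. h r 0" "\<forall>j\<in>{1..m}. v 0 j" "\<forall>j\<in>{1..m}. \<not> v (2*m) j"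
    "\<forall>r\<in>{1..m}. h r m \<noteq> h (2*m+1-r) m"
    "\<forall>r j. \<not> (1 \<le> r \<and> r \<le> 2*m \<and> j \<le> m) \<longrightarrow> \<not> h r j"
    "\<forall>r j. \<not> (r \<le> 2*m \<and> 1 \<le> j \<and> j \<le> m) \<longrightarrow> \<not> v r j"
  using assms unfolding HT_states_def by auto

lemma col_spec:
  assumes s: "(h, v) \<in> HT_states m" and j: "j \<in> {1..m}"
  shows "\<exists>r\<in>{1..2*m}. spec h (r, j)"
proof (rule ccontr)
  assume "\<not> ?thesis"
  hence ns: "\<forall>r\<in>{1..2*m}. h r (j-1) = h r j" unfolding spec_def by auto
  have "\<forall>r. r \<le> 2*m \<longrightarrow> v r j"
  proof
    fix r show "r \<le> 2*m \<longrightarrow> v r j"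
    proof (induction r)
      case 0 thus ?case using HT_props(2)[OF s] j by auto
    next
      case (Suc r)
      show ?case
      proof
        assume r: "Suc r \<le> 2*m"
        have n: "n_in (h (Suc r) (j-1)) (h (Suc r) j) (v (Suc r - 1) j) (v (Suc r) j) = 2"
          using HT_nin[OF s, of "Suc r" j] r j by auto
        have "v r j = v (Suc r) j" using nin_eq[OF n] ns r by auto
        thus "v (Suc r) j" using Suc r by auto
      qed
    qed
  qed
  thus False using HT_props(3)[OF s] j by auto
qed

lemma row_true:
  assumes s: "(h, v) \<in> HT_states m" and r: "r \<in> {1..2*m}" and ns: "\<forall>j\<in>{1..m}. \<not> spec h (r, j)"
  shows "h r m"
proof -
  have "\<forall>j. j \<le> m \<longrightarrow> h r j"
  proof
    fix j show "j \<le> m \<longrightarrow> h r j"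
    proof (induction j)
      case 0 thus ?case using HT_props(1)[OF s] r by auto
    next
      case (Suc j)
      thus ?case using ns unfolding spec_def by auto
    qed
  qed
  thus ?thesis by auto
qed

lemma kk_i: "i \<in> {1..m} \<Longrightarrow> kk m i = i" "i \<in> {1..m} \<Longrightarrow> kk m (2*m+1-i) = i"
  unfolding kk_def by auto

lemma row_spec:
  assumes s: "(h, v) \<in> HT_states m" and i: "i \<in> {1..m}"
  shows "\<exists>w\<in>VV m. kk m (fst w) = i \<and> spec h w"
proof (rule ccontr)
  assume na: "\<not> ?thesis"
  hence n1: "\<forall>j\<in>{1..m}. \<not> spec h (i, j)" and n2: "\<forall>j\<in>{1..m}. \<not> spec h (2*m+1-i, j)"
  proof -
    have A: "\<forall>w\<in>VV m. kk m (fst w) = i \<longrightarrow> \<not> spec h w" using na by auto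
    show "\<forall>j\<in>{1..m}. \<not> spec h (i, j)" using A kk_i[OF i] i unfolding VV_def by auto
    show "\<forall>j\<in>{1..m}. \<not> spec h (2*m+1-i, j)"
    proof
      fix j assume j: "j \<in> {1..m}"
      have "(2*m+1-i, j) \<in> VV m" using i j unfolding VV_def by auto
      thus "\<not> spec h (2*m+1-i, j)" using A kk_i(2)[OF i] by auto
    qed
  qed
  have h1: "h i m" using row_true[OF s _ n1] i by auto
  have "2*m+1-i \<in> {1..2*m}" using i by auto
  hence h2: "h (2*m+1-i) m" using row_true[OF s _ n2] by auto
  show False using HT_props(4)[OF s] i h1 h2 by auto
qed

lemma card_group:
  assumes "finite A" "finite I" "g ` A \<subseteq> I"
  shows "card A = (\<Sum>i\<in>I. card {a\<in>A. g a = i})"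
proof -
  have "(\<Sum>i\<in>I. \<Sum>a\<in>{a. a\<in>A \<and> g a = i}. (1::nat)) = (\<Sum>a\<in>A. 1)" by (rule sum.group[OF assms])
  thus ?thesis by simp
qed

lemma sum_ge1:
  fixes f :: "'a \<Rightarrow> nat"
  assumes "finite I" "\<forall>i\<in>I. f i \<ge> 1"
  shows "sum f I \<ge> card I" and "sum f I = card I \<Longrightarrow> \<forall>i\<in>I. f i = 1"
proof -
  have "(\<Sum>i\<in>I. (1::nat)) \<le> sum f I" using sum_mono[of I "\<lambda>_. 1" f] assms by auto
  thus "sum f I \<ge> card I" by simp
  assume eq: "sum f I = card I"
  show "\<forall>i\<in>I. f i = 1"
  proof (rule ccontr)
    assume "\<not> (\<forall>i\<in>I. f i = 1)"
    then obtain i where "i \<in> I" "f i \<noteq> 1" by auto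
    hence "(\<Sum>i\<in>I. (1::nat)) < sum f I" using assms by (intro sum_strict_mono_ex1) force+
    thus False using eq by simp
  qed
qed

definition Gi :: "nat \<Rightarrow> nat \<Rightarrow> (nat \<times> nat) set" where "Gi m i = {w\<in>VV m. kk m (fst w) = i}"
definition Cj :: "nat \<Rightarrow> nat \<Rightarrow> (nat \<times> nat) set" where "Cj m j = {w\<in>VV m. snd w = j}"

lemma finVV: "finite (VV m)" unfolding VV_def by simp

lemma card_VV: "card (VV m) = 2*m*m" unfolding VV_def by (simp add: card_cartesian_product)

lemma card_Gi:
  assumes i: "i \<in> {1..m}" shows "card (Gi m i) = 2*m"
proof -
  have "Gi m i = {i, 2*m+1-i} \<times> {1..m}"
    using i unfolding Gi_def VV_def kk_def by (auto simp: min_def split: if_splits)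
  moreover have "i \<noteq> 2*m+1-i" using i by auto
  ultimately show ?thesis by (simp add: card_cartesian_product)
qed

lemma card_Cj:
  assumes j: "j \<in> {1..m}" shows "card (Cj m j) = 2*m"
proof -
  have "Cj m j = {1..2*m} \<times> {j}" using j unfolding Cj_def VV_def by auto
  thus ?thesis by (simp add: card_cartesian_product)
qed

lemma kk_VV: "kk m ` fst ` VV m \<subseteq> {1..m}" unfolding VV_def using kk_range by auto
lemma kk_VV': "(\<lambda>w. kk m (fst w)) ` VV m \<subseteq> {1..m}" unfolding VV_def using kk_range by auto
lemma snd_VV: "snd ` VV m \<subseteq> {1..m}" unfolding VV_def by auto

definition Xs :: "nat \<Rightarrow> (nat \<times> nat \<Rightarrow> nat) \<Rightarrow> nat \<Rightarrow> nat" where "Xs m E i = (\<Sum>w\<in>Gi m i. E w)"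
definition Ys :: "nat \<Rightarrow> (nat \<times> nat \<Rightarrow> nat) \<Rightarrow> nat \<Rightarrow> nat" where "Ys m E j = (\<Sum>w\<in>Cj m j. 2 - E w)"
definition \<alpha>E :: "nat \<Rightarrow> (nat \<times> nat \<Rightarrow> nat) \<Rightarrow> nat \<Rightarrow> nat" where "\<alpha>E m E i = Xs m E i - 1"
definition \<beta>E :: "nat \<Rightarrow> (nat \<times> nat \<Rightarrow> nat) \<Rightarrow> nat \<Rightarrow> nat" where "\<beta>E m E j = Ys m E j - 1"
definition Emax :: "nat \<Rightarrow> (nat \<Rightarrow> nat \<Rightarrow> bool) \<Rightarrow> nat \<times> nat \<Rightarrow> nat" where
  "Emax m h = (\<lambda>w. if w \<in> VV m then (if spec h w then 1 else 2) else undefined)"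
definition Sp :: "nat \<Rightarrow> (nat \<Rightarrow> nat \<Rightarrow> bool) \<Rightarrow> (nat \<times> nat) set" where
  "Sp m h = {w\<in>VV m. spec h w}"

lemma finGi: "finite (Gi m i)" unfolding Gi_def using finVV by simp
lemma finCj: "finite (Cj m j)" unfolding Cj_def using finVV by simp
lemma finSp: "finite (Sp m h)" unfolding Sp_def using finVV by simp

lemma E_allowed: "E \<in> PiE (VV m) (allowed h) \<Longrightarrow> w \<in> VV m \<Longrightarrow> E w \<in> allowed h w"
  by auto

lemma Xs_ge1:
  assumes s: "(h, v) \<in> HT_states m" and E: "E \<in> PiE (VV m) (allowed h)" and i: "i \<in> {1..m}"
  shows "Xs m E i \<ge> 1"
proof -
  obtain w where w: "w \<in> VV m" "kk m (fst w) = i" "spec h w" using row_spec[OF s i] by auto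
  have "E w = 1" using E_allowed[OF E w(1)] w(3) unfolding allowed_def by simp
  moreover have "w \<in> Gi m i" using w unfolding Gi_def by simp
  ultimately have "E w \<le> Xs m E i" unfolding Xs_def by (intro member_le_sum finGi) auto
  thus ?thesis using \<open>E w = 1\<close> by simp
qed

lemma Ys_ge1:
  assumes s: "(h, v) \<in> HT_states m" and E: "E \<in> PiE (VV m) (allowed h)" and j: "j \<in> {1..m}"
  shows "Ys m E j \<ge> 1"
proof -
  obtain r where r: "r \<in> {1..2*m}" "spec h (r, j)" using col_spec[OF s j] by auto
  have w: "(r, j) \<in> VV m" using r j unfolding VV_def by auto
  have "E (r, j) = 1" using E_allowed[OF E w] r(2) unfolding allowed_def by simp
  moreover have "(r, j) \<in> Cj m j" using w unfolding Cj_def by simp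
  ultimately have "2 - E (r, j) \<le> Ys m E j" unfolding Ys_def
    by (intro member_le_sum[where f="\<lambda>w. 2 - E w", OF _ _ finCj]) auto
  thus ?thesis using \<open>E (r, j) = 1\<close> by simp
qed

lemma sum_Xs: "(\<Sum>i\<in>{1..m}. Xs m E i) = (\<Sum>w\<in>VV m. E w)"
  unfolding Xs_def Gi_def using sum.group[OF finVV finite_atLeastAtMost kk_VV', where h=E] by simp

lemma sum_alpha:
  assumes s: "(h, v) \<in> HT_states m" and E: "E \<in> PiE (VV m) (allowed h)"
  shows "(\<Sum>i\<in>{1..m}. \<alpha>E m E i) = (\<Sum>w\<in>VV m. E w) - m"
proof -
  have "(\<Sum>i\<in>{1..m}. \<alpha>E m E i) = (\<Sum>i\<in>{1..m}. Xs m E i) - (\<Sum>i\<in>{1..m}. 1)"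
    unfolding \<alpha>E_def using Xs_ge1[OF s E] by (intro sum_subtractf_nat) auto
  thus ?thesis using sum_Xs by simp
qed

lemma E_le: "E \<in> PiE (VV m) (allowed h) \<Longrightarrow> w \<in> VV m \<Longrightarrow> E w \<le> Emax m h w"
  unfolding Emax_def using E_allowed[of E m h w] by (auto simp: allowed_def)

lemma sum_if12:
  assumes "finite A"
  shows "(\<Sum>w\<in>A. if P w then 1 else 2::nat) = 2 * card A - card {w\<in>A. P w}"
proof -
  have "(\<Sum>w\<in>A. if P w then 1 else 2::nat) = (\<Sum>w\<in>A \<inter> {w. P w}. 1) + (\<Sum>w\<in>A \<inter> - {w. P w}. 2)"
    using assms by (rule sum.If_cases)
  also have "\<dots> = card {w\<in>A. P w} + 2 * card {w\<in>A. \<not> P w}"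
    by (simp add: Int_def Collect_conj_eq[symmetric] set_diff_eq Compl_eq)
  also have "card {w\<in>A. \<not> P w} = card A - card {w\<in>A. P w}"
  proof -
    have "{w\<in>A. \<not> P w} = A - {w\<in>A. P w}" by auto
    thus ?thesis using assms by (simp add: card_Diff_subset)
  qed
  finally show ?thesis using card_mono[OF assms, of "{w\<in>A. P w}"] by auto
qed

lemma sum_Emax: "(\<Sum>w\<in>VV m. Emax m h w) = 2 * card (VV m) - card (Sp m h)"
proof -
  have "(\<Sum>w\<in>VV m. Emax m h w) = (\<Sum>w\<in>VV m. if spec h w then 1 else 2)"
    unfolding Emax_def by (rule sum.cong) auto
  thus ?thesis using sum_if12[OF finVV] unfolding Sp_def by simp
qed

lemma colcount_ge1:
  assumes s: "(h, v) \<in> HT_states m" and j: "j \<in> {1..m}"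
  shows "card {w\<in>Sp m h. snd w = j} \<ge> 1"
proof -
  obtain r where r: "r \<in> {1..2*m}" "spec h (r, j)" using col_spec[OF s j] by auto
  have "(r, j) \<in> {w\<in>Sp m h. snd w = j}" using r j unfolding Sp_def VV_def by auto
  moreover have "finite {w\<in>Sp m h. snd w = j}" using finSp by simp
  ultimately have "0 < card {w\<in>Sp m h. snd w = j}" by (auto simp only: card_gt_0_iff)
  thus ?thesis by simp
qed

lemma rowcount_ge1:
  assumes s: "(h, v) \<in> HT_states m" and i: "i \<in> {1..m}"
  shows "card {w\<in>Sp m h. kk m (fst w) = i} \<ge> 1"
proof -
  obtain w where w: "w \<in> VV m" "kk m (fst w) = i" "spec h w" using row_spec[OF s i] by auto
  have "w \<in> {w\<in>Sp m h. kk m (fst w) = i}" using w unfolding Sp_def by auto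
  moreover have "finite {w\<in>Sp m h. kk m (fst w) = i}" using finSp by simp
  ultimately have "0 < card {w\<in>Sp m h. kk m (fst w) = i}" by (auto simp only: card_gt_0_iff)
  thus ?thesis by simp
qed

lemma Sp_VV: "Sp m h \<subseteq> VV m" unfolding Sp_def by auto

lemma card_Sp_cols: "card (Sp m h) = (\<Sum>j\<in>{1..m}. card {w\<in>Sp m h. snd w = j})"
  using card_group[OF finSp, of "{1..m}" snd] snd_VV Sp_VV by blast

lemma card_Sp_rows: "card (Sp m h) = (\<Sum>i\<in>{1..m}. card {w\<in>Sp m h. kk m (fst w) = i})"
  using card_group[OF finSp, of "{1..m}" "\<lambda>w. kk m (fst w)"] kk_VV' Sp_VV by blast

lemma card_Sp_ge:
  assumes s: "(h, v) \<in> HT_states m"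
  shows "card (Sp m h) \<ge> m"
  using sum_ge1(1)[of "{1..m}" "\<lambda>j. card {w\<in>Sp m h. snd w = j}"] colcount_ge1[OF s] card_Sp_cols by simp

lemma card_Sp_le: "card (Sp m h) \<le> card (VV m)"
  using card_mono[OF finVV Sp_VV] .

lemma deg_le:
  assumes s: "(h, v) \<in> HT_states m" and E: "E \<in> PiE (VV m) (allowed h)"
  shows "(\<Sum>i\<in>{1..m}. \<alpha>E m E i) \<le> 2*m*(2*m-1)"
    and "(\<Sum>i\<in>{1..m}. \<alpha>E m E i) = 2*m*(2*m-1) \<Longrightarrow> E = Emax m h \<and> card (Sp m h) = m"
proof -
  have le: "(\<Sum>w\<in>VV m. E w) \<le> (\<Sum>w\<in>VV m. Emax m h w)" using E_le[OF E] by (intro sum_mono) auto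
  have cs: "card (Sp m h) \<ge> m" by (rule card_Sp_ge[OF s])
  have cV: "card (VV m) = 2*m*m" by (rule card_VV)
  have cl: "card (Sp m h) \<le> 2*m*m" using card_Sp_le[of m h] cV by simp
  have eq: "2*m*(2*m-1) = 2*(2*m*m) - m - m" by (simp add: algebra_simps)
  show "(\<Sum>i\<in>{1..m}. \<alpha>E m E i) \<le> 2*m*(2*m-1)"
    using sum_alpha[OF s E] le sum_Emax[of m h] cs cV eq by linarith
  assume top: "(\<Sum>i\<in>{1..m}. \<alpha>E m E i) = 2*m*(2*m-1)"
  have both: "card (Sp m h) = m \<and> (\<Sum>w\<in>VV m. E w) = (\<Sum>w\<in>VV m. Emax m h w)"
  proof (cases "m = 0")
    case True
    hence "VV m = {}" unfolding VV_def by simp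
    thus ?thesis using Sp_VV[of m h] True by auto
  next
    case False
    hence "2*m \<le> 2*m*m" by simp
    thus ?thesis using sum_alpha[OF s E] top le sum_Emax[of m h] cs cV eq cl by (intro conjI; linarith)
  qed
  have cSp: "card (Sp m h) = m" and sE: "(\<Sum>w\<in>VV m. E w) = (\<Sum>w\<in>VV m. Emax m h w)"
    using both by auto
  have "\<forall>w\<in>VV m. E w = Emax m h w"
  proof (rule ccontr)
    assume "\<not> (\<forall>w\<in>VV m. E w = Emax m h w)"
    then obtain w where w: "w \<in> VV m" "E w \<noteq> Emax m h w" by auto
    hence "E w < Emax m h w" using E_le[OF E w(1)] by simp
    hence "(\<Sum>w\<in>VV m. E w) < (\<Sum>w\<in>VV m. Emax m h w)"
      using E_le[OF E] w(1) by (intro sum_strict_mono_ex1[OF finVV]) auto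
    thus False using sE by simp
  qed
  moreover have "\<forall>w. w \<notin> VV m \<longrightarrow> E w = Emax m h w" using E unfolding Emax_def by (auto simp: PiE_def extensional_def)
  ultimately have "E = Emax m h" by (intro ext) (metis)
  thus "E = Emax m h \<and> card (Sp m h) = m" using cSp by simp
qed

lemma Emax_PiE: "Emax m h \<in> PiE (VV m) (allowed h)"
  unfolding Emax_def allowed_def by auto

lemma top_exps:
  assumes s: "(h, v) \<in> HT_states m" and c: "card (Sp m h) = m"
  shows "\<forall>i\<in>{1..m}. \<alpha>E m (Emax m h) i = 2*(2*m-1)" and "\<forall>j\<in>{1..m}. \<beta>E m (Emax m h) j = 0"
proof -
  have r1: "\<forall>i\<in>{1..m}. card {w\<in>Sp m h. kk m (fst w) = i} \<ge> 1" using rowcount_ge1[OF s] by blast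
  have r2: "(\<Sum>i\<in>{1..m}. card {w\<in>Sp m h. kk m (fst w) = i}) = card {1..m::nat}"
    using card_Sp_rows[of m h] c by simp
  have rc: "\<forall>i\<in>{1..m}. card {w\<in>Sp m h. kk m (fst w) = i} = 1"
    by (rule sum_ge1(2)[OF finite_atLeastAtMost r1 r2])
  have c1: "\<forall>j\<in>{1..m}. card {w\<in>Sp m h. snd w = j} \<ge> 1" using colcount_ge1[OF s] by blast
  have c2: "(\<Sum>j\<in>{1..m}. card {w\<in>Sp m h. snd w = j}) = card {1..m::nat}"
    using card_Sp_cols[of m h] c by simp
  have cc: "\<forall>j\<in>{1..m}. card {w\<in>Sp m h. snd w = j} = 1"
    by (rule sum_ge1(2)[OF finite_atLeastAtMost c1 c2])
  show "\<forall>i\<in>{1..m}. \<alpha>E m (Emax m h) i = 2*(2*m-1)"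
  proof
    fix i assume i: "i \<in> {1..m}"
    have "Xs m (Emax m h) i = (\<Sum>w\<in>Gi m i. if spec h w then 1 else 2)"
      unfolding Xs_def Emax_def Gi_def by (rule sum.cong) auto
    also have "\<dots> = 2 * card (Gi m i) - card {w\<in>Gi m i. spec h w}" by (rule sum_if12[OF finGi])
    also have "{w\<in>Gi m i. spec h w} = {w\<in>Sp m h. kk m (fst w) = i}" unfolding Gi_def Sp_def by auto
    finally have "Xs m (Emax m h) i = 2 * (2*m) - 1" using rc i card_Gi[OF i] by simp
    thus "\<alpha>E m (Emax m h) i = 2*(2*m-1)" unfolding \<alpha>E_def by simp
  qed
  show "\<forall>j\<in>{1..m}. \<beta>E m (Emax m h) j = 0"
  proof
    fix j assume j: "j \<in> {1..m}"
    have "Ys m (Emax m h) j = (\<Sum>w\<in>Cj m j. if spec h w then 1 else 0)"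
      unfolding Ys_def Emax_def Cj_def by (rule sum.cong) auto
    also have "\<dots> = card {w\<in>Cj m j. spec h w}" using finCj by (simp add: sum.If_cases Int_def)
    also have "{w\<in>Cj m j. spec h w} = {w\<in>Sp m h. snd w = j}" unfolding Cj_def Sp_def by auto
    finally have "Ys m (Emax m h) j = 1" using cc j by simp
    thus "\<beta>E m (Emax m h) j = 0" unfolding \<beta>E_def by simp
  qed
qed

lemma prod_group_pow:
  fixes f :: "nat \<Rightarrow> complex"
  assumes A: "finite A" and I: "finite I" and g: "g ` A \<subseteq> I"
  shows "(\<Prod>w\<in>A. f (g w) ^ p w) = (\<Prod>i\<in>I. f i ^ (\<Sum>w\<in>{w\<in>A. g w = i}. p w))"
proof -
  have "(\<Prod>w\<in>A. f (g w) ^ p w) = (\<Prod>i\<in>I. \<Prod>w\<in>{w. w\<in>A \<and> g w = i}. f (g w) ^ p w)"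
    by (rule prod.group[OF A I g, symmetric])
  also have "\<dots> = (\<Prod>i\<in>I. f i ^ (\<Sum>w\<in>{w\<in>A. g w = i}. p w))"
    by (intro prod.cong refl) (simp add: power_sum)
  finally show ?thesis .
qed

lemma pow_cancel:
  fixes z :: complex
  assumes "z \<noteq> 0" "X \<ge> 1" "N \<ge> 1"
  shows "z^(N-1) * z^X * inverse z ^ N = z^(X-1)"
proof -
  obtain X' where X: "X = Suc X'" using assms(2) by (cases X) auto
  obtain N' where N: "N = Suc N'" using assms(3) by (cases N) auto
  show ?thesis unfolding X N using assms(1) by (simp add: power_inverse field_simps power_add[symmetric])
qed

lemma term_fact:
  assumes m: "m \<ge> 1" and s: "(h, v) \<in> HT_states m" and E: "E \<in> PiE (VV m) (allowed h)"
    and xy: "\<forall>i\<in>{1..m}. x i \<noteq> 0 \<and> y i \<noteq> 0"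
  shows "(\<Prod>i\<in>{1..m}. x i ^ (2*m-1) * y i ^ (2*m-1)) *
           (\<Prod>w\<in>VV m. coef a (h, v) w (E w) * tm m x y w (E w)) =
         (\<Prod>w\<in>VV m. coef a (h, v) w (E w)) * (\<Prod>i\<in>{1..m}. x i ^ \<alpha>E m E i * y i ^ \<beta>E m E i)"
proof -
  let ?X = "\<lambda>w. x (kk m (fst w))" and ?Y = "\<lambda>w. y (snd w)"
  have t: "(\<Prod>w\<in>VV m. tm m x y w (E w)) =
     (\<Prod>w\<in>VV m. ?X w ^ E w) * (\<Prod>w\<in>VV m. ?Y w ^ (2 - E w)) *
     (\<Prod>w\<in>VV m. inverse (?X w) ^ 1) * (\<Prod>w\<in>VV m. inverse (?Y w) ^ 1)"
    unfolding tm_def by (simp add: prod.distrib)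
  have t1: "(\<Prod>w\<in>VV m. ?X w ^ E w) = (\<Prod>i\<in>{1..m}. x i ^ Xs m E i)"
    unfolding Xs_def Gi_def by (rule prod_group_pow[OF finVV finite_atLeastAtMost kk_VV'])
  have t2: "(\<Prod>w\<in>VV m. ?Y w ^ (2 - E w)) = (\<Prod>i\<in>{1..m}. y i ^ Ys m E i)"
    unfolding Ys_def Cj_def by (rule prod_group_pow[OF finVV finite_atLeastAtMost snd_VV])
  have t3: "(\<Prod>w\<in>VV m. inverse (?X w) ^ 1) = (\<Prod>i\<in>{1..m}. inverse (x i) ^ (2*m))"
  proof -
    have "(\<Prod>w\<in>VV m. inverse (?X w) ^ 1) = (\<Prod>i\<in>{1..m}. inverse (x i) ^ (\<Sum>w\<in>Gi m i. 1))"
      unfolding Gi_def by (rule prod_group_pow[OF finVV finite_atLeastAtMost kk_VV', of "\<lambda>i. inverse (x i)"])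
    also have "\<dots> = (\<Prod>i\<in>{1..m}. inverse (x i) ^ (2*m))"
      by (intro prod.cong refl) (simp add: card_Gi)
    finally show ?thesis .
  qed
  have t4: "(\<Prod>w\<in>VV m. inverse (?Y w) ^ 1) = (\<Prod>i\<in>{1..m}. inverse (y i) ^ (2*m))"
  proof -
    have "(\<Prod>w\<in>VV m. inverse (?Y w) ^ 1) = (\<Prod>i\<in>{1..m}. inverse (y i) ^ (\<Sum>w\<in>Cj m i. 1))"
      unfolding Cj_def by (rule prod_group_pow[OF finVV finite_atLeastAtMost snd_VV, of "\<lambda>i. inverse (y i)"])
    also have "\<dots> = (\<Prod>i\<in>{1..m}. inverse (y i) ^ (2*m))"
      by (intro prod.cong refl) (simp add: card_Cj)
    finally show ?thesis .
  qed
  have px: "(\<Prod>i\<in>{1..m}. x i ^ (2*m-1)) * (\<Prod>i\<in>{1..m}. x i ^ Xs m E i) * (\<Prod>i\<in>{1..m}. inverse (x i) ^ (2*m))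
      = (\<Prod>i\<in>{1..m}. x i ^ \<alpha>E m E i)"
    unfolding prod.distrib[symmetric] \<alpha>E_def
    by (intro prod.cong refl pow_cancel) (use xy Xs_ge1[OF s E] m in auto)
  have py: "(\<Prod>i\<in>{1..m}. y i ^ (2*m-1)) * (\<Prod>i\<in>{1..m}. y i ^ Ys m E i) * (\<Prod>i\<in>{1..m}. inverse (y i) ^ (2*m))
      = (\<Prod>i\<in>{1..m}. y i ^ \<beta>E m E i)"
    unfolding prod.distrib[symmetric] \<beta>E_def
    by (intro prod.cong refl pow_cancel) (use xy Ys_ge1[OF s E] m in auto)
  have "(\<Prod>i\<in>{1..m}. x i ^ (2*m-1) * y i ^ (2*m-1)) *
           (\<Prod>w\<in>VV m. coef a (h, v) w (E w) * tm m x y w (E w)) =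
        (\<Prod>w\<in>VV m. coef a (h, v) w (E w)) *
        (((\<Prod>i\<in>{1..m}. x i ^ (2*m-1)) * (\<Prod>i\<in>{1..m}. x i ^ Xs m E i) * (\<Prod>i\<in>{1..m}. inverse (x i) ^ (2*m))) *
         ((\<Prod>i\<in>{1..m}. y i ^ (2*m-1)) * (\<Prod>i\<in>{1..m}. y i ^ Ys m E i) * (\<Prod>i\<in>{1..m}. inverse (y i) ^ (2*m))))"
    unfolding prod.distrib t t1 t2 t3 t4 by (simp only: mult_ac)
  also have "\<dots> = (\<Prod>w\<in>VV m. coef a (h, v) w (E w)) * (\<Prod>i\<in>{1..m}. x i ^ \<alpha>E m E i * y i ^ \<beta>E m E i)"
    unfolding px py prod.distrib ..
  finally show ?thesis .
qed

definition st :: "nat \<Rightarrow> (nat \<Rightarrow> nat) \<Rightarrow> (nat \<Rightarrow> nat \<Rightarrow> bool) \<times> (nat \<Rightarrow> nat \<Rightarrow> bool)" where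
  "st m \<rho> = (\<lambda>r j. 1 \<le> r \<and> r \<le> 2*m \<and> j \<le> m \<and> (\<forall>c\<in>{1..m}. c \<le> j \<longrightarrow> \<rho> c \<noteq> r),
              \<lambda>r j. r \<le> 2*m \<and> 1 \<le> j \<and> j \<le> m \<and> r < \<rho> j)"

lemma Rows_mm: "Rows m m = {1..2*m}" unfolding Rows_def by auto

lemma ValidD:
  assumes "\<rho> \<in> Valid m m {1..m}"
  shows "\<forall>j\<in>{1..m}. \<rho> j \<in> {1..2*m}" "inj_on \<rho> {1..m}"
    "\<forall>i\<in>{1..m}. \<forall>j\<in>{1..m}. \<rho> i + \<rho> j \<noteq> 2*m+1" "\<forall>j. j \<notin> {1..m} \<longrightarrow> \<rho> j = 0"
  using assms unfolding Valid_def Rows_mm by auto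

lemma st_spec:
  assumes V: "\<rho> \<in> Valid m m {1..m}" and w: "(r, j) \<in> VV m"
  shows "spec (fst (st m \<rho>)) (r, j) = (\<rho> j = r)"
proof -
  note vd = ValidD[OF V]
  have r: "1 \<le> r" "r \<le> 2*m" and j: "1 \<le> j" "j \<le> m" using w unfolding VV_def by auto
  show ?thesis
  proof (cases "\<rho> j = r")
    case True
    have "\<forall>c\<in>{1..m}. c \<le> j - 1 \<longrightarrow> \<rho> c \<noteq> r"
    proof (intro ballI impI)
      fix c assume c: "c \<in> {1..m}" "c \<le> j - 1"
      hence "c \<noteq> j" using j by auto
      show "\<rho> c \<noteq> r"
      proof
        assume "\<rho> c = r"
        hence "\<rho> c = \<rho> j" using True by simp
        hence "c = j" using inj_onD[OF vd(2)] c(1) j by auto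
        thus False using \<open>c \<noteq> j\<close> by simp
      qed
    qed
    hence h1: "fst (st m \<rho>) r (j-1)" using r j unfolding st_def by simp
    have h2: "\<not> fst (st m \<rho>) r j" using True j unfolding st_def by auto
    show ?thesis using h1 h2 True unfolding spec_def by simp
  next
    case False
    have "(\<forall>c\<in>{1..m}. c \<le> j - 1 \<longrightarrow> \<rho> c \<noteq> r) = (\<forall>c\<in>{1..m}. c \<le> j \<longrightarrow> \<rho> c \<noteq> r)"
    proof -
      have eq: "\<And>c. (c \<le> j - 1) = (c \<le> j \<and> c \<noteq> j)" using j by auto
      show ?thesis unfolding eq using False by blast
    qed
    moreover have "j - 1 \<le> m" using j by simp
    ultimately have "fst (st m \<rho>) r (j-1) = fst (st m \<rho>) r j" using r j unfolding st_def by simp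
    thus ?thesis using False unfolding spec_def by simp
  qed
qed

lemma st_HT:
  assumes V: "\<rho> \<in> Valid m m {1..m}"
  shows "st m \<rho> \<in> HT_states m"
proof -
  note vd = ValidD[OF V]
  obtain h v where hv: "st m \<rho> = (h, v)" by (cases "st m \<rho>") auto
  have hd: "h = (\<lambda>r j. 1 \<le> r \<and> r \<le> 2*m \<and> j \<le> m \<and> (\<forall>c\<in>{1..m}. c \<le> j \<longrightarrow> \<rho> c \<noteq> r))"
    and vdf: "v = (\<lambda>r j. r \<le> 2*m \<and> 1 \<le> j \<and> j \<le> m \<and> r < \<rho> j)" using hv unfolding st_def by auto
  have c1: "\<forall>r j. \<not> (1 \<le> r \<and> r \<le> 2*m \<and> j \<le> m) \<longrightarrow> \<not> h r j" unfolding hd by auto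
  have c2: "\<forall>r j. \<not> (r \<le> 2*m \<and> 1 \<le> j \<and> j \<le> m) \<longrightarrow> \<not> v r j" unfolding vdf by auto
  have c3: "\<forall>r\<in>{1..2*m}. h r 0" unfolding hd by auto
  have c4: "\<forall>j\<in>{1..m}. v 0 j" unfolding vdf using vd(1) by auto
  have c5: "\<forall>j\<in>{1..m}. \<not> v (2*m) j" unfolding vdf using vd(1) by auto
  have hm: "\<And>r. r \<in> {1..2*m} \<Longrightarrow> h r m = (r \<notin> \<rho> ` {1..m})" unfolding hd by auto
  have c6: "\<forall>r\<in>{1..m}. h r m \<noteq> h (2*m+1-r) m"
  proof
    fix r assume r: "r \<in> {1..m}"
    have X: "\<rho> ` {1..m} \<subseteq> {m+1-m..m+m}" using vd(1) by auto
    have cX: "card (\<rho> ` {1..m}) = m" using card_image[OF vd(2)] by simp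
    have np: "\<forall>x\<in>\<rho> ` {1..m}. \<forall>y\<in>\<rho> ` {1..m}. x + y \<noteq> 2*m+1" using vd(3) by auto
    have "r \<in> \<rho> ` {1..m} \<or> 2*m+1-r \<in> \<rho> ` {1..m}"
      by (rule pairs_hit[OF X order.refl np cX]) (use r in auto)
    moreover have "\<not> (r \<in> \<rho> ` {1..m} \<and> 2*m+1-r \<in> \<rho> ` {1..m})"
    proof
      assume "r \<in> \<rho> ` {1..m} \<and> 2*m+1-r \<in> \<rho> ` {1..m}"
      then obtain i j where "i \<in> {1..m}" "j \<in> {1..m}" "\<rho> i = r" "\<rho> j = 2*m+1-r" by auto
      thus False using vd(3) r by force
    qed
    moreover have "r \<in> {1..2*m}" "2*m+1-r \<in> {1..2*m}" using r by auto
    ultimately show "h r m \<noteq> h (2*m+1-r) m" using hm by blast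
  qed
  have c7: "\<forall>r\<in>{1..2*m}. \<forall>j\<in>{1..m}. n_in (h r (j-1)) (h r j) (v (r-1) j) (v r j) = 2"
  proof (intro ballI)
    fix r j assume r: "r \<in> {1..2*m}" and j: "j \<in> {1..m}"
    have w: "(r, j) \<in> VV m" using r j unfolding VV_def by auto
    have sp: "(h r (j-1) \<noteq> h r j) = (\<rho> j = r)" using st_spec[OF V w] hv unfolding spec_def by simp
    have rj: "\<rho> j \<in> {1..2*m}" using vd(1) j by auto
    show "n_in (h r (j-1)) (h r j) (v (r-1) j) (v r j) = 2"
    proof (cases "\<rho> j = r")
      case True
      hence "h r (j-1) \<noteq> h r j" using sp by simp
      moreover have "\<not> h r j" using True j unfolding hd by auto
      moreover have "v (r-1) j" "\<not> v r j" using True r j unfolding vdf by auto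
      ultimately show ?thesis unfolding n_in_def by auto
    next
      case False
      hence "h r (j-1) = h r j" using sp by simp
      moreover have "v (r-1) j = v r j" using False r j rj unfolding vdf by auto
      ultimately show ?thesis unfolding n_in_def by auto
    qed
  qed
  show ?thesis unfolding hv HT_states_def using c1 c2 c3 c4 c5 c6 c7 by blast
qed

lemma st_card:
  assumes V: "\<rho> \<in> Valid m m {1..m}"
  shows "card (Sp m (fst (st m \<rho>))) = m"
proof -
  note vd = ValidD[OF V]
  have "Sp m (fst (st m \<rho>)) = (\<lambda>j. (\<rho> j, j)) ` {1..m}"
  proof
    show "Sp m (fst (st m \<rho>)) \<subseteq> (\<lambda>j. (\<rho> j, j)) ` {1..m}"
    proof
      fix w assume w: "w \<in> Sp m (fst (st m \<rho>))"
      obtain r j where rj: "w = (r, j)" by (cases w) auto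
      have wV: "(r, j) \<in> VV m" and sp: "spec (fst (st m \<rho>)) (r, j)" using w rj unfolding Sp_def by auto
      have "\<rho> j = r" using st_spec[OF V wV] sp by simp
      moreover have "j \<in> {1..m}" using wV unfolding VV_def by auto
      ultimately show "w \<in> (\<lambda>j. (\<rho> j, j)) ` {1..m}" using rj by auto
    qed
  next
    show "(\<lambda>j. (\<rho> j, j)) ` {1..m} \<subseteq> Sp m (fst (st m \<rho>))"
    proof
      fix w assume "w \<in> (\<lambda>j. (\<rho> j, j)) ` {1..m}"
      then obtain j where j: "j \<in> {1..m}" "w = (\<rho> j, j)" by auto
      have wV: "(\<rho> j, j) \<in> VV m" using j vd(1) unfolding VV_def by auto
      thus "w \<in> Sp m (fst (st m \<rho>))" using st_spec[OF V wV] j unfolding Sp_def by simp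
    qed
  qed
  moreover have "inj_on (\<lambda>j. (\<rho> j, j)) {1..m}" by (auto simp: inj_on_def)
  ultimately show ?thesis by (simp add: card_image)
qed

lemma st_inj: "inj_on (st m) (Valid m m {1..m})"
proof (rule inj_onI)
  fix \<rho>1 \<rho>2 assume V1: "\<rho>1 \<in> Valid m m {1..m}" and V2: "\<rho>2 \<in> Valid m m {1..m}" and e: "st m \<rho>1 = st m \<rho>2"
  have ev: "\<And>r j. (r \<le> 2*m \<and> 1 \<le> j \<and> j \<le> m \<and> r < \<rho>1 j) = (r \<le> 2*m \<and> 1 \<le> j \<and> j \<le> m \<and> r < \<rho>2 j)"
    using arg_cong[OF e, of snd] unfolding st_def by (simp add: fun_eq_iff)
  show "\<rho>1 = \<rho>2"
  proof
    fix j show "\<rho>1 j = \<rho>2 j"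
    proof (cases "j \<in> {1..m}")
      case True
      have a1: "\<rho>1 j \<in> {1..2*m}" "\<rho>2 j \<in> {1..2*m}" using ValidD(1)[OF V1] ValidD(1)[OF V2] True by auto
      show ?thesis
      proof (rule ccontr)
        assume ne: "\<rho>1 j \<noteq> \<rho>2 j"
        show False
        proof (cases "\<rho>1 j < \<rho>2 j")
          case True
          thus False using ev[of "\<rho>1 j" j] a1 \<open>j \<in> {1..m}\<close> by auto
        next
          case False
          hence "\<rho>2 j < \<rho>1 j" using ne by simp
          thus False using ev[of "\<rho>2 j" j] a1 \<open>j \<in> {1..m}\<close> by auto
        qed
      qed
    next
      case False
      thus ?thesis using ValidD(4)[OF V1] ValidD(4)[OF V2] by auto
    qed
  qed
qed

lemma st_cf:
  assumes V: "\<rho> \<in> Valid m m {1..m}"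
  shows "(\<Prod>w\<in>VV m. coef a (st m \<rho>) w (Emax m (fst (st m \<rho>)) w)) = Wt a m m {1..m} \<rho>"
proof -
  note vd = ValidD[OF V]
  have "(\<Prod>w\<in>VV m. coef a (st m \<rho>) w (Emax m (fst (st m \<rho>)) w)) =
        (\<Prod>r\<in>{1..2*m}. \<Prod>j\<in>{1..m}. coef a (st m \<rho>) (r, j) (Emax m (fst (st m \<rho>)) (r, j)))"
    unfolding VV_def by (simp add: prod.cartesian_product)
  also have "\<dots> = (\<Prod>j\<in>{1..m}. \<Prod>r\<in>{1..2*m}. coef a (st m \<rho>) (r, j) (Emax m (fst (st m \<rho>)) (r, j)))"
    by (rule prod.swap)
  also have "\<dots> = (\<Prod>j\<in>{1..m}. \<Prod>r\<in>{1..2*m}. cell a {1..m} \<rho> r j)"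
  proof (intro prod.cong refl)
    fix j r assume j: "j \<in> {1..m}" and r: "r \<in> {1..2*m}"
    have w: "(r, j) \<in> VV m" using r j unfolding VV_def by auto
    have sp: "spec (fst (st m \<rho>)) (r, j) = (\<rho> j = r)" by (rule st_spec[OF V w])
    have rj: "\<rho> j \<in> {1..2*m}" using vd(1) j by auto
    show "coef a (st m \<rho>) (r, j) (Emax m (fst (st m \<rho>)) (r, j)) = cell a {1..m} \<rho> r j"
    proof (cases "\<rho> j = r")
      case True
      thus ?thesis using sp unfolding coef_def cell_def by simp
    next
      case False
      have em: "Emax m (fst (st m \<rho>)) (r, j) = 2" using w sp False unfolding Emax_def by simp
      have eq: "\<And>c. (c \<le> j - 1) = (c \<le> j \<and> c \<noteq> j)" using j by auto
      have h: "fst (st m \<rho>) r (j - 1) = (\<forall>c\<in>{1..m}. c \<le> j \<longrightarrow> \<rho> c \<noteq> r)"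
      proof -
        have "j - 1 \<le> m" using j by auto
        hence "fst (st m \<rho>) r (j - 1) = (\<forall>c\<in>{1..m}. c \<le> j - 1 \<longrightarrow> \<rho> c \<noteq> r)" using r unfolding st_def by simp
        also have "\<dots> = (\<forall>c\<in>{1..m}. c \<le> j \<longrightarrow> \<rho> c \<noteq> r)" unfolding eq using False by blast
        finally show ?thesis .
      qed
      have v: "snd (st m \<rho>) (r - 1) j = (r < \<rho> j)" using False r j rj unfolding st_def by auto
      show ?thesis using sp False by (simp add: coef_def cell_def em h[simplified] v[simplified])
    qed
  qed
  finally show ?thesis unfolding Wt_def Rows_mm .
qed

lemma colcount_eq1:
  assumes s: "(h, v) \<in> HT_states m" and c: "card (Sp m h) = m"
  shows "\<forall>j\<in>{1..m}. card {w\<in>Sp m h. snd w = j} = 1"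
proof -
  have c1: "\<forall>j\<in>{1..m}. card {w\<in>Sp m h. snd w = j} \<ge> 1" using colcount_ge1[OF s] by blast
  have c2: "(\<Sum>j\<in>{1..m}. card {w\<in>Sp m h. snd w = j}) = card {1..m::nat}"
    using card_Sp_cols[of m h] c by simp
  show ?thesis by (rule sum_ge1(2)[OF finite_atLeastAtMost c1 c2])
qed

lemma st_surj:
  assumes s: "(h, v) \<in> HT_states m" and c: "card (Sp m h) = m"
  shows "\<exists>\<rho>\<in>Valid m m {1..m}. (h, v) = st m \<rho>"
proof -
  note cc = colcount_eq1[OF s c]
  note hp = HT_props[OF s]
  have uniq: "\<forall>j\<in>{1..m}. \<exists>!r. r \<in> {1..2*m} \<and> spec h (r, j)"
  proof
    fix j assume j: "j \<in> {1..m}"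
    have "card {w\<in>Sp m h. snd w = j} = 1" using cc j by auto
    then obtain w0 where w0: "{w\<in>Sp m h. snd w = j} = {w0}" by (rule card_1_singletonE)
    hence w0m: "w0 \<in> Sp m h" "snd w0 = j" by auto
    obtain r0 where r0: "w0 = (r0, j)" using w0m(2) by (cases w0) auto
    have r0r: "r0 \<in> {1..2*m}" "spec h (r0, j)" using w0m(1) r0 unfolding Sp_def VV_def by auto
    show "\<exists>!r. r \<in> {1..2*m} \<and> spec h (r, j)"
    proof (rule ex1I[of _ r0])
      show "r0 \<in> {1..2*m} \<and> spec h (r0, j)" using r0r by simp
    next
      fix r assume r: "r \<in> {1..2*m} \<and> spec h (r, j)"
      hence "(r, j) \<in> {w\<in>Sp m h. snd w = j}" using j unfolding Sp_def VV_def by auto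
      thus "r = r0" using w0 r0 by auto
    qed
  qed
  define \<rho> where "\<rho> j = (if j \<in> {1..m} then (THE r. r \<in> {1..2*m} \<and> spec h (r, j)) else 0)" for j
  have \<rho>1: "\<forall>j\<in>{1..m}. \<rho> j \<in> {1..2*m} \<and> spec h (\<rho> j, j)"
  proof
    fix j assume j: "j \<in> {1..m}"
    have "(THE r. r \<in> {1..2*m} \<and> spec h (r, j)) \<in> {1..2*m} \<and> spec h (THE r. r \<in> {1..2*m} \<and> spec h (r, j), j)"
      using theI'[OF uniq[rule_format, OF j]] .
    thus "\<rho> j \<in> {1..2*m} \<and> spec h (\<rho> j, j)" using j unfolding \<rho>_def by simp
  qed
  have \<rho>2: "\<forall>j\<in>{1..m}. \<forall>r\<in>{1..2*m}. spec h (r, j) \<longrightarrow> r = \<rho> j"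
    using uniq \<rho>1 by blast
  have col: "\<forall>j\<in>{1..m}. \<forall>r. r \<le> 2*m \<longrightarrow> v r j = (r < \<rho> j)"
  proof (intro ballI allI)
    fix j r assume j: "j \<in> {1..m}"
    have rj: "\<rho> j \<in> {1..2*m}" "spec h (\<rho> j, j)" using \<rho>1 j by auto
    show "r \<le> 2*m \<longrightarrow> v r j = (r < \<rho> j)"
    proof (induction r)
      case 0 thus ?case using hp(2) j rj by auto
    next
      case (Suc r)
      show ?case
      proof
        assume r: "Suc r \<le> 2*m"
        have n: "n_in (h (Suc r) (j-1)) (h (Suc r) j) (v r j) (v (Suc r) j) = 2"
          using HT_nin[OF s, of "Suc r" j] r j by auto
        have ih: "v r j = (r < \<rho> j)" using Suc r by auto
        show "v (Suc r) j = (Suc r < \<rho> j)"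
        proof (cases "Suc r = \<rho> j")
          case True
          hence "h (Suc r) (j-1) \<noteq> h (Suc r) j" using rj unfolding spec_def by simp
          from nin_spec[OF n this] have "\<not> v (Suc r) j" using ih True by auto
          thus ?thesis using True by simp
        next
          case False
          hence "\<not> spec h (Suc r, j)" using \<rho>2 j r by auto
          hence "h (Suc r) (j-1) = h (Suc r) j" unfolding spec_def by simp
          from nin_eq[OF n this] show ?thesis using ih False by auto
        qed
      qed
    qed
  qed
  have type1: "\<forall>j\<in>{1..m}. h (\<rho> j) (j-1) \<and> \<not> h (\<rho> j) j"
  proof
    fix j assume j: "j \<in> {1..m}"
    have rj: "\<rho> j \<in> {1..2*m}" "spec h (\<rho> j, j)" using \<rho>1 j by auto
    have n: "n_in (h (\<rho> j) (j-1)) (h (\<rho> j) j) (v (\<rho> j - 1) j) (v (\<rho> j) j) = 2"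
      using HT_nin[OF s, of "\<rho> j" j] rj j by auto
    have A: "v (\<rho> j - 1) j" using col j rj by auto
    have "h (\<rho> j) (j-1) \<noteq> h (\<rho> j) j" using rj unfolding spec_def by simp
    from nin_spec[OF n this] show "h (\<rho> j) (j-1) \<and> \<not> h (\<rho> j) j" using A by auto
  qed
  have row: "\<forall>r\<in>{1..2*m}. \<forall>j. j \<le> m \<longrightarrow> h r j = (\<forall>c\<in>{1..m}. c \<le> j \<longrightarrow> \<rho> c \<noteq> r)"
  proof (intro ballI allI)
    fix r j assume r: "r \<in> {1..2*m}"
    show "j \<le> m \<longrightarrow> h r j = (\<forall>c\<in>{1..m}. c \<le> j \<longrightarrow> \<rho> c \<noteq> r)"
    proof (induction j)
      case 0 thus ?case using hp(1) r by auto
    next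
      case (Suc j)
      show ?case
      proof
        assume jm: "Suc j \<le> m"
        have ih: "h r j = (\<forall>c\<in>{1..m}. c \<le> j \<longrightarrow> \<rho> c \<noteq> r)" using Suc jm by auto
        have sj: "Suc j \<in> {1..m}" using jm by auto
        show "h r (Suc j) = (\<forall>c\<in>{1..m}. c \<le> Suc j \<longrightarrow> \<rho> c \<noteq> r)"
        proof (cases "\<rho> (Suc j) = r")
          case True
          thus ?thesis using type1 sj by auto
        next
          case False
          hence "\<not> spec h (r, Suc j)" using \<rho>2 sj r by auto
          hence "h r j = h r (Suc j)" unfolding spec_def by simp
          moreover have "(\<forall>c\<in>{1..m}. c \<le> Suc j \<longrightarrow> \<rho> c \<noteq> r) = (\<forall>c\<in>{1..m}. c \<le> j \<longrightarrow> \<rho> c \<noteq> r)"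
            using False by (auto simp: le_Suc_eq)
          ultimately show ?thesis using ih by simp
        qed
      qed
    qed
  qed
  have inj: "inj_on \<rho> {1..m}"
  proof (rule ccontr)
    assume "\<not> inj_on \<rho> {1..m}"
    then obtain c1 c2 where c: "c1 \<in> {1..m}" "c2 \<in> {1..m}" "\<rho> c1 = \<rho> c2" "c1 < c2"
      unfolding inj_on_def by (metis linorder_neqE_nat)
    have "h (\<rho> c2) (c2-1)" using type1 c(2) by auto
    moreover have "\<rho> c2 \<in> {1..2*m}" using \<rho>1 c(2) by auto
    ultimately have "\<forall>c\<in>{1..m}. c \<le> c2 - 1 \<longrightarrow> \<rho> c \<noteq> \<rho> c2" using row c(2) by auto
    thus False using c by auto
  qed
  have hm: "\<And>i. i \<in> {1..m} \<Longrightarrow> \<not> h (\<rho> i) m"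
  proof -
    fix i assume i: "i \<in> {1..m}"
    have "\<rho> i \<in> {1..2*m}" using \<rho>1 i by auto
    thus "\<not> h (\<rho> i) m" using row i by auto
  qed
  have part: "\<forall>i\<in>{1..m}. \<forall>j\<in>{1..m}. \<rho> i + \<rho> j \<noteq> 2*m+1"
  proof (intro ballI notI)
    fix i j assume i: "i \<in> {1..m}" and j: "j \<in> {1..m}" and e: "\<rho> i + \<rho> j = 2*m+1"
    have ri: "\<rho> i \<in> {1..2*m}" "\<rho> j \<in> {1..2*m}" using \<rho>1 i j by auto
    show False
    proof (cases "\<rho> i \<le> m")
      case True
      hence "h (\<rho> i) m \<noteq> h (2*m+1-\<rho> i) m" using hp(4) ri by auto
      moreover have "2*m+1-\<rho> i = \<rho> j" using e by auto
      ultimately show False using hm[OF i] hm[OF j] by auto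
    next
      case False
      hence "\<rho> j \<le> m" using e by auto
      hence "h (\<rho> j) m \<noteq> h (2*m+1-\<rho> j) m" using hp(4) ri by auto
      moreover have "2*m+1-\<rho> j = \<rho> i" using e by auto
      ultimately show False using hm[OF i] hm[OF j] by auto
    qed
  qed
  have V: "\<rho> \<in> Valid m m {1..m}"
    unfolding Valid_def Rows_mm using \<rho>1 inj part by (auto simp: \<rho>_def)
  have "h = fst (st m \<rho>)"
  proof (intro ext)
    fix r j
    show "h r j = fst (st m \<rho>) r j"
    proof (cases "1 \<le> r \<and> r \<le> 2*m \<and> j \<le> m")
      case True thus ?thesis using row unfolding st_def by auto
    next
      case False thus ?thesis using hp(5) unfolding st_def by auto
    qed
  qed
  moreover have "v = snd (st m \<rho>)"
  proof (intro ext)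
    fix r j
    show "v r j = snd (st m \<rho>) r j"
    proof (cases "r \<le> 2*m \<and> 1 \<le> j \<and> j \<le> m")
      case True thus ?thesis using col unfolding st_def by auto
    next
      case False thus ?thesis using hp(6) unfolding st_def by auto
    qed
  qed
  ultimately show ?thesis using V by (intro bexI[of _ \<rho>]) auto
qed

lemma finite_HT: "finite (HT_states m)"
proof -
  let ?B1 = "{1..2*m} \<times> {0..m}" and ?B2 = "{0..2*m} \<times> {1..m}"
  let ?f = "\<lambda>(h, v). ({(r, j)\<in>?B1. h r j}, {(r, j)\<in>?B2. v r j})"
  have inj: "inj_on ?f (HT_states m)"
  proof (rule inj_onI)
    fix p q assume p: "p \<in> HT_states m" and q: "q \<in> HT_states m" and e: "?f p = ?f q"
    obtain h v where pv: "p = (h, v)" by (cases p) auto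
    obtain h' v' where qv: "q = (h', v')" by (cases q) auto
    note hp = HT_props[OF p[unfolded pv]] and hq = HT_props[OF q[unfolded qv]]
    have e1: "{(r, j)\<in>?B1. h r j} = {(r, j)\<in>?B1. h' r j}" and e2: "{(r, j)\<in>?B2. v r j} = {(r, j)\<in>?B2. v' r j}"
      using e pv qv by auto
    have "h = h'"
    proof (intro ext)
      fix r j show "h r j = h' r j"
      proof (cases "(r, j) \<in> ?B1")
        case True thus ?thesis using e1 by (auto simp: set_eq_iff)
      next
        case False thus ?thesis using hp(5) hq(5) by auto
      qed
    qed
    moreover have "v = v'"
    proof (intro ext)
      fix r j show "v r j = v' r j"
      proof (cases "(r, j) \<in> ?B2")
        case True thus ?thesis using e2 by (auto simp: set_eq_iff)
      next
        case False thus ?thesis using hp(6) hq(6) by auto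
      qed
    qed
    ultimately show "p = q" using pv qv by simp
  qed
  have "?f ` HT_states m \<subseteq> Pow ?B1 \<times> Pow ?B2" by auto
  hence "finite (?f ` HT_states m)" by (rule finite_subset) simp
  thus ?thesis using finite_imageD[OF _ inj] by blast
qed

theorem lemma9:
  fixes m :: nat and a :: complex
  assumes "m \<ge> 1" and "a \<noteq> 0"
  shows "\<exists>S :: ((nat \<Rightarrow> nat) \<times> (nat \<Rightarrow> nat) \<times> complex) set.
           finite S \<and>
           (\<forall>(\<alpha>, \<beta>, c)\<in>S. (\<Sum>i\<in>{1..m}. \<alpha> i) < 2*m*(2*m-1)) \<and>
           (\<forall>x y :: nat \<Rightarrow> complex. (\<forall>i\<in>{1..m}. x i \<noteq> 0 \<and> y i \<noteq> 0) \<longrightarrow>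
              Z_HT_tilde m a x y =
                C_HT m a * (\<Prod>i\<in>{1..m}. x i ^ (2*(2*m-1)))
                + (\<Sum>(\<alpha>, \<beta>, c)\<in>S. c * (\<Prod>i\<in>{1..m}. x i ^ \<alpha> i * y i ^ \<beta> i)))"
proof -
  note m = assms(1) and a = assms(2)
  define P where "P = (SIGMA s:HT_states m. PiE (VV m) (allowed (fst s)))"
  define cf where "cf p = (\<Prod>w\<in>VV m. coef a (fst p) w (snd p w))" for p
  define key where "key p = (\<alpha>E m (snd p), \<beta>E m (snd p))" for p :: "((nat \<Rightarrow> nat \<Rightarrow> bool) \<times> (nat \<Rightarrow> nat \<Rightarrow> bool)) \<times> (nat \<times> nat \<Rightarrow> nat)"
  define deg where "deg p = (\<Sum>i\<in>{1..m}. \<alpha>E m (snd p) i)" for p :: "((nat \<Rightarrow> nat \<Rightarrow> bool) \<times> (nat \<Rightarrow> nat \<Rightarrow> bool)) \<times> (nat \<times> nat \<Rightarrow> nat)"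
  define Ptop where "Ptop = {p\<in>P. deg p = 2*m*(2*m-1)}"
  define Plow where "Plow = {p\<in>P. deg p < 2*m*(2*m-1)}"
  define S where "S = (\<lambda>k. (fst k, snd k, \<Sum>p\<in>{p\<in>Plow. key p = k}. cf p)) ` (key ` Plow)"
  define mono where "mono x y k = (\<Prod>i\<in>{1..m}. x i ^ fst k i * y i ^ snd k i)"
    for x y :: "nat \<Rightarrow> complex" and k :: "(nat \<Rightarrow> nat) \<times> (nat \<Rightarrow> nat)"
  have finP: "finite P" unfolding P_def using finite_HT finVV
    by (intro finite_SigmaI finite_PiE) (auto simp: allowed_def)
  have finPlow: "finite Plow" unfolding Plow_def using finP by simp
  have Pdeg: "\<And>p. p \<in> P \<Longrightarrow> deg p \<le> 2*m*(2*m-1) \<and> (deg p = 2*m*(2*m-1) \<longrightarrow> snd p = Emax m (fst (fst p)) \<and> card (Sp m (fst (fst p))) = m)"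
  proof -
    fix p assume p: "p \<in> P"
    obtain h v E where pp: "p = ((h, v), E)" by (metis prod.collapse)
    have s: "(h, v) \<in> HT_states m" and E: "E \<in> PiE (VV m) (allowed h)" using p pp unfolding P_def by auto
    show "deg p \<le> 2*m*(2*m-1) \<and> (deg p = 2*m*(2*m-1) \<longrightarrow> snd p = Emax m (fst (fst p)) \<and> card (Sp m (fst (fst p))) = m)"
      using deg_le[OF s E] pp unfolding deg_def by simp
  qed
  have S1: "finite S" unfolding S_def using finPlow by simp
  have S2: "\<forall>(\<alpha>, \<beta>, c)\<in>S. (\<Sum>i\<in>{1..m}. \<alpha> i) < 2*m*(2*m-1)"
    unfolding S_def Plow_def key_def deg_def by auto
  have S3: "Z_HT_tilde m a x y = C_HT m a * (\<Prod>i\<in>{1..m}. x i ^ (2*(2*m-1)))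
                + (\<Sum>(\<alpha>, \<beta>, c)\<in>S. c * (\<Prod>i\<in>{1..m}. x i ^ \<alpha> i * y i ^ \<beta> i))"
    if xy: "\<forall>i\<in>{1..m}. x i \<noteq> 0 \<and> y i \<noteq> 0" for x y
  proof -
    have "Z_HT_tilde m a x y = (\<Prod>i\<in>{1..m}. x i ^ (2*m-1) * y i ^ (2*m-1)) *
            (\<Sum>s\<in>HT_states m. \<Sum>E\<in>PiE (VV m) (allowed (fst s)). \<Prod>w\<in>VV m. coef a s w (E w) * tm m x y w (E w))"
      unfolding Z_HT_tilde_def Z_expand[OF a xy] ..
    also have "\<dots> = (\<Sum>p\<in>P. (\<Prod>i\<in>{1..m}. x i ^ (2*m-1) * y i ^ (2*m-1)) *
            (\<Prod>w\<in>VV m. coef a (fst p) w (snd p w) * tm m x y w (snd p w)))"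
      unfolding P_def sum_distrib_left
      by (subst sum.Sigma) (auto simp: finite_HT finVV allowed_def intro!: finite_PiE simp: split_def)
    also have "\<dots> = (\<Sum>p\<in>P. cf p * mono x y (key p))"
    proof (rule sum.cong[OF refl])
      fix p assume p: "p \<in> P"
      obtain h v E where pp: "p = ((h, v), E)" by (metis prod.collapse)
      have s: "(h, v) \<in> HT_states m" and E: "E \<in> PiE (VV m) (allowed h)" using p pp unfolding P_def by auto
      show "(\<Prod>i\<in>{1..m}. x i ^ (2*m-1) * y i ^ (2*m-1)) *
            (\<Prod>w\<in>VV m. coef a (fst p) w (snd p w) * tm m x y w (snd p w)) = cf p * mono x y (key p)"
        using term_fact[OF m s E xy, of a] pp unfolding cf_def mono_def key_def by simp
    qed
    also have "\<dots> = (\<Sum>p\<in>Ptop. cf p * mono x y (key p)) + (\<Sum>p\<in>Plow. cf p * mono x y (key p))"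
    proof -
      have "P = Ptop \<union> Plow"
      proof
        show "P \<subseteq> Ptop \<union> Plow"
        proof
          fix p assume p: "p \<in> P"
          have "deg p \<le> 2*m*(2*m-1)" using Pdeg[OF p] by blast
          thus "p \<in> Ptop \<union> Plow" using p unfolding Ptop_def Plow_def by auto
        qed
      qed (auto simp: Ptop_def Plow_def)
      moreover have "Ptop \<inter> Plow = {}" unfolding Ptop_def Plow_def by auto
      moreover have "finite Ptop" unfolding Ptop_def using finP by simp
      ultimately show ?thesis using finPlow by (simp add: sum.union_disjoint)
    qed
    also have "(\<Sum>p\<in>Ptop. cf p * mono x y (key p)) = C_HT m a * (\<Prod>i\<in>{1..m}. x i ^ (2*(2*m-1)))"
    proof -
      define T where "T = {s\<in>HT_states m. card (Sp m (fst s)) = m}"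
      have monotop: "mono x y (key p) = (\<Prod>i\<in>{1..m}. x i ^ (2*(2*m-1)))" if p: "p \<in> Ptop" for p
      proof -
        obtain h v E where pp: "p = ((h, v), E)" by (metis prod.collapse)
        have pP: "p \<in> P" and dp: "deg p = 2*m*(2*m-1)" using p unfolding Ptop_def by auto
        have s: "(h, v) \<in> HT_states m" using pP pp unfolding P_def by auto
        have "E = Emax m h" "card (Sp m h) = m" using Pdeg[OF pP] dp pp by auto
        thus ?thesis using top_exps[OF s] pp unfolding mono_def key_def by (intro prod.cong refl) auto
      qed
      have bij1: "bij_betw (\<lambda>s. (s, Emax m (fst s))) T Ptop"
      proof (rule bij_betwI')
        fix s t show "((s, Emax m (fst s)) = (t, Emax m (fst t))) = (s = t)" by auto
      next
        fix s assume s: "s \<in> T"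
        obtain h v where hv: "s = (h, v)" by (cases s) auto
        have sH: "(h, v) \<in> HT_states m" and c: "card (Sp m h) = m" using s hv unfolding T_def by auto
        have "(s, Emax m (fst s)) \<in> P" using sH hv Emax_PiE unfolding P_def by auto
        moreover have "deg (s, Emax m (fst s)) = 2*m*(2*m-1)"
        proof -
          have "deg (s, Emax m (fst s)) = (\<Sum>i\<in>{1..m}. 2*(2*m-1))"
            unfolding deg_def using top_exps(1)[OF sH c] hv by (intro sum.cong refl) auto
          thus ?thesis by simp
        qed
        ultimately show "(s, Emax m (fst s)) \<in> Ptop" unfolding Ptop_def by simp
      next
        fix p assume p: "p \<in> Ptop"
        obtain h v E where pp: "p = ((h, v), E)" by (metis prod.collapse)
        have pP: "p \<in> P" and dp: "deg p = 2*m*(2*m-1)" using p unfolding Ptop_def by auto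
        have s: "(h, v) \<in> HT_states m" using pP pp unfolding P_def by auto
        have "E = Emax m h" "card (Sp m h) = m" using Pdeg[OF pP] dp pp by auto
        thus "\<exists>s\<in>T. p = (s, Emax m (fst s))" using s pp unfolding T_def by auto
      qed
      have bij2: "bij_betw (st m) (Valid m m {1..m}) T"
      proof (rule bij_betw_imageI)
        show "inj_on (st m) (Valid m m {1..m})" by (rule st_inj)
        show "st m ` Valid m m {1..m} = T"
        proof
          show "st m ` Valid m m {1..m} \<subseteq> T" unfolding T_def using st_HT st_card by auto
          show "T \<subseteq> st m ` Valid m m {1..m}"
          proof
            fix s assume s: "s \<in> T"
            obtain h v where hv: "s = (h, v)" by (cases s) auto
            have sH: "(h, v) \<in> HT_states m" and c: "card (Sp m h) = m" using s hv unfolding T_def by auto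
            obtain \<rho> where "\<rho> \<in> Valid m m {1..m}" "(h, v) = st m \<rho>" using st_surj[OF sH c] by blast
            thus "s \<in> st m ` Valid m m {1..m}" using hv by auto
          qed
        qed
      qed
      have "(\<Sum>p\<in>Ptop. cf p * mono x y (key p)) = (\<Sum>p\<in>Ptop. cf p) * (\<Prod>i\<in>{1..m}. x i ^ (2*(2*m-1)))"
        unfolding sum_distrib_right using monotop by (intro sum.cong refl) auto
      also have "(\<Sum>p\<in>Ptop. cf p) = (\<Sum>s\<in>T. cf (s, Emax m (fst s)))"
        using sum.reindex_bij_betw[OF bij1, of cf] by simp
      also have "\<dots> = (\<Sum>\<rho>\<in>Valid m m {1..m}. cf (st m \<rho>, Emax m (fst (st m \<rho>))))"
        using sum.reindex_bij_betw[OF bij2, of "\<lambda>s. cf (s, Emax m (fst s))"] by simp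
      also have "\<dots> = (\<Sum>\<rho>\<in>Valid m m {1..m}. Wt a m m {1..m} \<rho>)"
        unfolding cf_def by (intro sum.cong refl) (simp add: st_cf)
      also have "\<dots> = (\<Prod>i<m. gstep a i)" by (rule main_sum) auto
      also have "\<dots> = C_HT m a" by (rule G_eq[OF a])
      finally show ?thesis .
    qed
    also have "(\<Sum>p\<in>Plow. cf p * mono x y (key p)) = (\<Sum>(\<alpha>, \<beta>, c)\<in>S. c * (\<Prod>i\<in>{1..m}. x i ^ \<alpha> i * y i ^ \<beta> i))"
    proof -
      have "(\<Sum>p\<in>Plow. cf p * mono x y (key p)) =
            (\<Sum>k\<in>key ` Plow. \<Sum>p\<in>{p. p \<in> Plow \<and> key p = k}. cf p * mono x y (key p))"
        by (rule sum.group[symmetric]) (auto simp: finPlow)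
      also have "\<dots> = (\<Sum>k\<in>key ` Plow. (\<Sum>p\<in>{p\<in>Plow. key p = k}. cf p) * mono x y k)"
        unfolding sum_distrib_right by (intro sum.cong refl) auto
      also have "\<dots> = (\<Sum>t\<in>S. (case t of (\<alpha>, \<beta>, c) \<Rightarrow> c * mono x y (\<alpha>, \<beta>)))"
      proof -
        have inj: "inj_on (\<lambda>k. (fst k, snd k, \<Sum>p\<in>{p\<in>Plow. key p = k}. cf p)) (key ` Plow)"
          by (rule inj_onI) (auto simp: prod_eq_iff)
        show ?thesis unfolding S_def sum.reindex[OF inj] by (simp add: o_def)
      qed
      finally show ?thesis unfolding mono_def by (simp add: split_def)
    qed
    finally show ?thesis .
  qed
  show ?thesis using S1 S2 S3 by blast
qed

end
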